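(* For every $\lambda\in\mathcal{P}^+$, the hypergeometric differential operator satisfies $$D\,m_\lambda=\epsilon_\lambda m_\lambda+\sum_{\mu\in\mathcal{P}^+,\ \mu\prec\lambda}b_{\lambda\mu}m_\mu,$$ with $\epsilon_\lambda=\langle\lambda+\rho_g,\lambda+\rho_g\rangle-\langle\rho_g,\rho_g\rangle$ and $$b_{\lambda\mu}=\frac{|W_\mu|}{|W_\lambda|}\sum_{\alpha\in[\lambda,\mu]}g_\alpha\langle\lambda,\alpha\rangle\,n_{\lambda\mu}(\alpha),$$ where $[\lambda,\mu]$ is the set of $\alpha\in R^+$ such that $\lambda-\ell\alpha\in W(\mu)$ for some $\ell\in\{1,2,\dots,[\langle\lambda,\alpha^\vee\rangle/2]\}$ (such $\ell$ is then unique), and $n_{\lambda\mu}(\alpha)=1$ if $\|\mu\|=\|P_\alpha(\lambda)\|$ and $n_{\lambda\mu}(\alpha)=2$ otherwise, with $P_\alpha=(\mathrm{Id}+r_\alpha)/2$.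
   Context: $E$ is a real Euclidean space (dimension $N$) spanned by an irreducible, not necessarily reduced, root system $R$ with Weyl group $W$, positive roots $R^+$; $\alpha^\vee=2\alpha/\langle\alpha,\alpha\rangle$, $r_\alpha(x)=x-\langle x,\alpha^\vee\rangle\alpha$. $\mathcal{Q}^+=\mathrm{Span}_{\mathbb{N}}(R^+)$; $\mathcal{P}$ weight lattice, $\mathcal{P}^+$ dominant weights, $\lambda\succeq\mu$ iff $\lambda-\mu\in\mathcal{Q}^+$. Formal exponentials $e^\lambda$, $m_\lambda=\sum_{\mu\in W(\lambda)}e^\mu$. $\partial_xe^\lambda=\langle\lambda,x\rangle e^\lambda$. Real parameters $g_\alpha$ with $g_{w(\alpha)}=g_\alpha$. The hypergeometric differential operator is $D=\sum_{j=1}^N\partial_{x_j}^2+\sum_{\alpha\in R^+}g_\alpha\frac{1+e^{-\alpha}}{1-e^{-\alpha}}\partial_\alpha$ ($x_j$ an orthonormal basis). $\rho_g=\frac12\sum_{\alpha\in R^+}g_\alpha\alpha$; $W_\mu$ is the stabilizer of $\mu$ in $W$; $[p]$ is the integer part of $p\ge0$. *)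

theory Defs
  imports "HOL-Analysis.Analysis"
begin

definition coroot :: "'a::euclidean_space \<Rightarrow> 'a" where
  "coroot \<alpha> = (2 / (\<alpha> \<bullet> \<alpha>)) *\<^sub>R \<alpha>"

definition refl :: "'a::euclidean_space \<Rightarrow> 'a \<Rightarrow> 'a" where
  "refl \<alpha> x = x - (x \<bullet> coroot \<alpha>) *\<^sub>R \<alpha>"

text \<open>Root system (not necessarily reduced) spanning the whole space.\<close>
definition root_system :: "'a::euclidean_space set \<Rightarrow> bool" where
  "root_system R \<longleftrightarrow> finite R \<and> 0 \<notin> R \<and> span R = UNIV \<and>
     (\<forall>\<alpha>\<in>R. refl \<alpha> ` R = R) \<and>
     (\<forall>\<alpha>\<in>R. \<forall>\<beta>\<in>R. \<beta> \<bullet> coroot \<alpha> \<in> \<int>)"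

definition irreducible_rs :: "'a::euclidean_space set \<Rightarrow> bool" where
  "irreducible_rs R \<longleftrightarrow> \<not> (\<exists>A B. A \<noteq> {} \<and> B \<noteq> {} \<and> A \<union> B = R \<and> A \<inter> B = {} \<and>
       (\<forall>a\<in>A. \<forall>b\<in>B. a \<bullet> b = 0))"

definition regular_vec :: "'a::euclidean_space set \<Rightarrow> 'a \<Rightarrow> bool" where
  "regular_vec R v \<longleftrightarrow> (\<forall>\<alpha>\<in>R. \<alpha> \<bullet> v \<noteq> 0)"

definition pos_roots :: "'a::euclidean_space set \<Rightarrow> 'a \<Rightarrow> 'a set" where
  "pos_roots R v = {\<alpha>\<in>R. \<alpha> \<bullet> v > 0}"

inductive_set weyl :: "'a::euclidean_space set \<Rightarrow> ('a \<Rightarrow> 'a) set" for R where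
  weyl_id: "id \<in> weyl R"
| weyl_step: "w \<in> weyl R \<Longrightarrow> \<alpha> \<in> R \<Longrightarrow> refl \<alpha> \<circ> w \<in> weyl R"

definition orbit :: "'a::euclidean_space set \<Rightarrow> 'a \<Rightarrow> 'a set" where
  "orbit R la = (%w. w la) ` weyl R"

definition stabilizer :: "'a::euclidean_space set \<Rightarrow> 'a \<Rightarrow> ('a \<Rightarrow> 'a) set" where
  "stabilizer R \<mu> = {w \<in> weyl R. w \<mu> = \<mu>}"

definition weights :: "'a::euclidean_space set \<Rightarrow> 'a set" where
  "weights R = {la. \<forall>\<alpha>\<in>R. la \<bullet> coroot \<alpha> \<in> \<int>}"

definition dominant :: "'a::euclidean_space set \<Rightarrow> 'a \<Rightarrow> 'a set" where
  "dominant R v = {la\<in>weights R. \<forall>\<alpha>\<in>pos_roots R v. la \<bullet> coroot \<alpha> \<ge> 0}"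

definition pos_cone :: "'a::euclidean_space set \<Rightarrow> 'a \<Rightarrow> 'a set" where
  "pos_cone R v = {x. \<exists>c::'a \<Rightarrow> nat. x = (\<Sum>\<alpha>\<in>pos_roots R v. real (c \<alpha>) *\<^sub>R \<alpha>)}"

definition dom_le :: "'a::euclidean_space set \<Rightarrow> 'a \<Rightarrow> 'a \<Rightarrow> 'a \<Rightarrow> bool" where
  "dom_le R v \<mu> la \<longleftrightarrow> la - \<mu> \<in> pos_cone R v"

definition dom_less :: "'a::euclidean_space set \<Rightarrow> 'a \<Rightarrow> 'a \<Rightarrow> 'a \<Rightarrow> bool" where
  "dom_less R v \<mu> la \<longleftrightarrow> dom_le R v \<mu> la \<and> \<mu> \<noteq> la"

text \<open>A formal (finite or formal-series) combination \<Sum> c(\<nu>) e^\<nu> is represented by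
  its coefficient function c :: 'a \<Rightarrow> real.\<close>

definition orbit_sum :: "'a::euclidean_space set \<Rightarrow> 'a \<Rightarrow> 'a \<Rightarrow> real" where
  "orbit_sum R la = indicator (orbit R la)"

text \<open>\<partial>_x e^\<nu> = <\<nu>,x> e^\<nu>\<close>
definition dderiv :: "'a::euclidean_space \<Rightarrow> ('a \<Rightarrow> real) \<Rightarrow> 'a \<Rightarrow> real" where
  "dderiv x f = (%\<nu>. (\<nu> \<bullet> x) * f \<nu>)"

definition laplacian :: "('a::euclidean_space \<Rightarrow> real) \<Rightarrow> 'a \<Rightarrow> real" where
  "laplacian f = (%\<nu>. \<Sum>j\<in>Basis. dderiv j (dderiv j f) \<nu>)"

text \<open>Multiplication by (1+e^{-\<alpha>})/(1-e^{-\<alpha>}) = 1 + 2 \<Sum>_{k\<ge>1} e^{-k\<alpha>}.\<close>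
definition mult_coth :: "'a::euclidean_space \<Rightarrow> ('a \<Rightarrow> real) \<Rightarrow> 'a \<Rightarrow> real" where
  "mult_coth \<alpha> f = (%\<nu>. f \<nu> + 2 * (\<Sum>k. f (\<nu> + real (Suc k) *\<^sub>R \<alpha>)))"

definition hyp_op :: "'a::euclidean_space set \<Rightarrow> 'a \<Rightarrow> ('a \<Rightarrow> real) \<Rightarrow> ('a \<Rightarrow> real) \<Rightarrow> 'a \<Rightarrow> real" where
  "hyp_op R v g f = (%\<nu>. laplacian f \<nu> +
      (\<Sum>\<alpha>\<in>pos_roots R v. g \<alpha> * mult_coth \<alpha> (dderiv \<alpha> f) \<nu>))"

definition rho :: "'a::euclidean_space set \<Rightarrow> 'a \<Rightarrow> ('a \<Rightarrow> real) \<Rightarrow> 'a" where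
  "rho R v g = (1/2) *\<^sub>R (\<Sum>\<alpha>\<in>pos_roots R v. g \<alpha> *\<^sub>R \<alpha>)"

definition eigval :: "'a::euclidean_space set \<Rightarrow> 'a \<Rightarrow> ('a \<Rightarrow> real) \<Rightarrow> 'a \<Rightarrow> real" where
  "eigval R v g la = (la + rho R v g) \<bullet> (la + rho R v g) - rho R v g \<bullet> rho R v g"

definition proj :: "'a::euclidean_space \<Rightarrow> 'a \<Rightarrow> 'a" where
  "proj \<alpha> x = (1/2) *\<^sub>R (x + refl \<alpha> x)"

definition root_interval :: "'a::euclidean_space set \<Rightarrow> 'a \<Rightarrow> 'a \<Rightarrow> 'a \<Rightarrow> 'a set" where
  "root_interval R v la \<mu> = {\<alpha>\<in>pos_roots R v. \<exists>l::nat. 1 \<le> l \<and>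
       real l \<le> of_int \<lfloor>(la \<bullet> coroot \<alpha>) / 2\<rfloor> \<and> la - real l *\<^sub>R \<alpha> \<in> orbit R \<mu>}"

definition nmult :: "'a::euclidean_space \<Rightarrow> 'a \<Rightarrow> 'a \<Rightarrow> real" where
  "nmult la \<mu> \<alpha> = (if norm \<mu> = norm (proj \<alpha> la) then 1 else 2)"

definition bcoef :: "'a::euclidean_space set \<Rightarrow> 'a \<Rightarrow> ('a \<Rightarrow> real) \<Rightarrow> 'a \<Rightarrow> 'a \<Rightarrow> real" where
  "bcoef R v g la \<mu> = real (card (stabilizer R \<mu>)) / real (card (stabilizer R la)) *
     (\<Sum>\<alpha>\<in>root_interval R v la \<mu>. g \<alpha> * (la \<bullet> \<alpha>) * nmult la \<mu> \<alpha>)"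

end

theory Submission
  imports Defs
begin

lemma coroot_inner: "x \<bullet> coroot a = 2 * (x \<bullet> a) / (a \<bullet> a)"
  unfolding coroot_def by (simp add: inner_commute)

lemma refl_add: "refl a (x + y) = refl a x + refl a y"
  unfolding refl_def by (simp add: inner_add_left algebra_simps)

lemma refl_scaleR: "refl a (c *\<^sub>R x) = c *\<^sub>R refl a x"
  unfolding refl_def by (simp add: algebra_simps scaleR_2)

lemma linear_refl: "linear (refl a)"
  by (rule linearI) (simp_all add: refl_add refl_scaleR)

lemma refl_inner:
  assumes "a \<noteq> 0" shows "refl a x \<bullet> refl a y = x \<bullet> y"
proof -
  have aa: "a \<bullet> a \<noteq> 0" using assms by simp
  show ?thesis unfolding refl_def coroot_inner
    using aa by (simp add: inner_diff_left inner_diff_right inner_commute field_simps)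
qed

lemma refl_inner_root:
  assumes "a \<noteq> 0" shows "refl a x \<bullet> a = - (x \<bullet> a)"
  using assms unfolding refl_def coroot_inner by (simp add: inner_diff_left field_simps)

lemma refl_refl:
  assumes "a \<noteq> 0" shows "refl a (refl a x) = x"
proof -
  have aa: "a \<bullet> a \<noteq> 0" using assms by simp
  have "refl a x \<bullet> coroot a = - (x \<bullet> coroot a)"
    using refl_inner_root[OF assms] unfolding coroot_inner by simp
  then show ?thesis unfolding refl_def[of a "refl a x"] by (simp add: refl_def)
qed

lemma refl_self: assumes "a \<noteq> 0" shows "refl a a = - a"
  using assms unfolding refl_def coroot_inner by (simp add: algebra_simps scaleR_2)

lemma refl_scale_root: assumes "c \<noteq> 0" shows "refl (c *\<^sub>R a) = refl a"
proof
  fix x show "refl (c *\<^sub>R a) x = refl a x"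
  proof (cases "a = 0")
    case True then show ?thesis by (simp add: refl_def coroot_def)
  next
    case False
    then show ?thesis using assms unfolding refl_def coroot_inner
      by (simp add: field_simps power2_eq_square)
  qed
qed

definition orth :: "('a::euclidean_space \<Rightarrow> 'a) \<Rightarrow> bool" where
  "orth u \<longleftrightarrow> linear u \<and> (\<forall>x y. u x \<bullet> u y = x \<bullet> y)"

lemma orth_refl: "a \<noteq> 0 \<Longrightarrow> orth (refl a)"
  by (simp add: orth_def linear_refl refl_inner)

lemma orth_comp: "orth u \<Longrightarrow> orth w \<Longrightarrow> orth (u \<circ> w)"
  by (simp add: orth_def linear_compose)

lemma orth_id: "orth id" by (simp add: orth_def linear_iff)

lemma orth_inner: "orth u \<Longrightarrow> u x \<bullet> u y = x \<bullet> y" by (simp add: orth_def)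

lemma orth_linear: "orth u \<Longrightarrow> linear u" by (simp add: orth_def)

lemma orth_norm: "orth u \<Longrightarrow> norm (u x) = norm x"
  by (simp add: orth_def norm_eq_sqrt_inner)

lemma orth_eq0: "orth u \<Longrightarrow> u x = 0 \<longleftrightarrow> x = 0"
  by (metis orth_norm norm_eq_zero)

lemma orth_inj: "orth u \<Longrightarrow> inj u"
proof (rule injI)
  fix x y assume "orth u" "u x = u y"
  then have "u (x - y) = 0" using orth_linear linear_diff by (metis right_minus_eq)
  then show "x = y" using orth_eq0[OF \<open>orth u\<close>] by simp
qed

lemma orth_coroot: "orth u \<Longrightarrow> u (coroot a) = coroot (u a)"
  unfolding coroot_def by (simp add: orth_inner orth_linear linear_scale)

lemma orth_refl_conj: "orth u \<Longrightarrow> u (refl a x) = refl (u a) (u x)"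
  unfolding refl_def
  by (simp add: orth_linear linear_diff linear_scale orth_coroot[symmetric] orth_inner)


locale RS =
  fixes R :: "'a::euclidean_space set" and v :: 'a
  assumes rs: "root_system R" and reg: "regular_vec R v"
begin

lemma finR: "finite R" using rs by (simp add: root_system_def)
lemma zeroR: "\<alpha> \<in> R \<Longrightarrow> \<alpha> \<noteq> 0" using rs by (auto simp: root_system_def)
lemma spanR: "span R = UNIV" using rs by (simp add: root_system_def)
lemma reflR: "\<alpha> \<in> R \<Longrightarrow> refl \<alpha> ` R = R" using rs by (simp add: root_system_def)
lemma integ: "\<alpha> \<in> R \<Longrightarrow> \<beta> \<in> R \<Longrightarrow> \<beta> \<bullet> coroot \<alpha> \<in> \<int>" using rs by (simp add: root_system_def)
lemma refl_mem: "\<alpha> \<in> R \<Longrightarrow> \<beta> \<in> R \<Longrightarrow> refl \<alpha> \<beta> \<in> R" using reflR by blast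
lemma neg_mem: "\<alpha> \<in> R \<Longrightarrow> - \<alpha> \<in> R" using refl_mem[of \<alpha> \<alpha>] refl_self zeroR by metis
lemma root_v: "\<alpha> \<in> R \<Longrightarrow> \<alpha> \<bullet> v \<noteq> 0" using reg by (simp add: regular_vec_def)

abbreviation "Rp \<equiv> pos_roots R v"
abbreviation "W \<equiv> weyl R"

lemma Rp_iff: "\<alpha> \<in> Rp \<longleftrightarrow> \<alpha> \<in> R \<and> \<alpha> \<bullet> v > 0" by (simp add: pos_roots_def)
lemma Rp_sub: "Rp \<subseteq> R" by (auto simp: Rp_iff)
lemma finRp: "finite Rp" using finR Rp_sub finite_subset by blast

lemma pos_or_neg: "\<alpha> \<in> R \<Longrightarrow> \<alpha> \<in> Rp \<or> - \<alpha> \<in> Rp"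
  using root_v[of \<alpha>] neg_mem[of \<alpha>] by (auto simp: Rp_iff)

lemma not_both: "\<alpha> \<in> Rp \<Longrightarrow> - \<alpha> \<notin> Rp" by (simp add: Rp_iff)

lemma weyl_orth: "w \<in> W \<Longrightarrow> orth w"
proof (induction rule: weyl.induct)
  case weyl_id show ?case by (rule orth_id)
next
  case (weyl_step w \<alpha>) show ?case by (rule orth_comp[OF orth_refl[OF zeroR[OF weyl_step(2)]] weyl_step.IH])
qed

lemma weyl_root: "w \<in> W \<Longrightarrow> \<alpha> \<in> R \<Longrightarrow> w \<alpha> \<in> R"
  by (induction rule: weyl.induct) (auto intro: refl_mem)

lemma weyl_comp: "w \<in> W \<Longrightarrow> u \<in> W \<Longrightarrow> w \<circ> u \<in> W"
proof (induction rule: weyl.induct)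
  case weyl_id then show ?case by simp
next
  case (weyl_step w \<alpha>)
  then have "refl \<alpha> \<circ> (w \<circ> u) \<in> W" by (intro weyl.weyl_step[OF weyl_step.IH[OF weyl_step.prems] weyl_step(2)])
  then show ?case by (metis comp_assoc)
qed

lemma weyl_refl: "\<alpha> \<in> R \<Longrightarrow> refl \<alpha> \<in> W"
proof -
  assume "\<alpha> \<in> R"
  then have "refl \<alpha> \<circ> id \<in> W" by (rule weyl.weyl_step[OF weyl.weyl_id])
  then show ?thesis by simp
qed

lemma weyl_inv_ex: "w \<in> W \<Longrightarrow> \<exists>u\<in>W. u \<circ> w = id \<and> w \<circ> u = id"
proof (induction rule: weyl.induct)
  case weyl_id then show ?case using weyl.weyl_id[of R] by (metis comp_id)
next
  case (weyl_step w \<alpha>)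
  then obtain u where u: "u \<in> W" "u \<circ> w = id" "w \<circ> u = id" by blast
  have rr: "refl \<alpha> \<circ> refl \<alpha> = id" using refl_refl zeroR[OF weyl_step(2)] by fastforce
  have "u \<circ> refl \<alpha> \<in> W" using weyl_comp[OF u(1) weyl_refl[OF weyl_step(2)]] .
  moreover have "(u \<circ> refl \<alpha>) \<circ> (refl \<alpha> \<circ> w) = id"
    by (metis comp_assoc rr u(2) comp_id)
  moreover have "(refl \<alpha> \<circ> w) \<circ> (u \<circ> refl \<alpha>) = id"
    by (metis comp_assoc rr u(3) comp_id)
  ultimately show ?case by blast
qed

lemma weyl_inv: "w \<in> W \<Longrightarrow> inv w \<in> W \<and> inv w \<circ> w = id \<and> w \<circ> inv w = id"
proof -
  assume w: "w \<in> W"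
  then obtain u where u: "u \<in> W" "u \<circ> w = id" "w \<circ> u = id" using weyl_inv_ex by blast
  then have "inv w = u" using inv_unique_comp by blast
  then show ?thesis using u by simp
qed

lemma weyl_inv_mem: "w \<in> W \<Longrightarrow> inv w \<in> W" using weyl_inv by blast
lemma weyl_inv_l: "w \<in> W \<Longrightarrow> inv w (w x) = x" using weyl_inv by (metis comp_apply id_apply)
lemma weyl_inv_r: "w \<in> W \<Longrightarrow> w (inv w x) = x" using weyl_inv by (metis comp_apply id_apply)

lemma weyl_perm: "w \<in> W \<Longrightarrow> w ` R = R"
proof
  assume w: "w \<in> W"
  show "w ` R \<subseteq> R" using weyl_root[OF w] by blast
  show "R \<subseteq> w ` R"
  proof
    fix \<alpha> assume "\<alpha> \<in> R"
    then have "inv w \<alpha> \<in> R" using weyl_root weyl_inv_mem w by blast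
    then show "\<alpha> \<in> w ` R" using weyl_inv_r[OF w] by (metis image_eqI)
  qed
qed

lemma weyl_bij: "w \<in> W \<Longrightarrow> bij_betw w R R"
  using weyl_perm orth_inj weyl_orth by (simp add: bij_betw_def inj_on_def inj_def) blast

lemma weyl_inner: "w \<in> W \<Longrightarrow> w x \<bullet> w y = x \<bullet> y" using weyl_orth orth_inner by blast
lemma weyl_linear: "w \<in> W \<Longrightarrow> linear w" using weyl_orth orth_linear by blast
lemma weyl_norm: "w \<in> W \<Longrightarrow> norm (w x) = norm x" using weyl_orth orth_norm by blast
lemma weyl_inj: "w \<in> W \<Longrightarrow> inj w" using weyl_orth orth_inj by blast
lemma weyl_coroot: "w \<in> W \<Longrightarrow> w (coroot a) = coroot (w a)" using weyl_orth orth_coroot by blast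
lemma weyl_conj: "w \<in> W \<Longrightarrow> w (refl a x) = refl (w a) (w x)" using weyl_orth orth_refl_conj by blast
lemma weyl_add: "w \<in> W \<Longrightarrow> w (x + y) = w x + w y" using weyl_linear linear_add by blast
lemma weyl_diff: "w \<in> W \<Longrightarrow> w (x - y) = w x - w y" using weyl_linear linear_diff by blast
lemma weyl_scale: "w \<in> W \<Longrightarrow> w (c *\<^sub>R x) = c *\<^sub>R w x" using weyl_linear linear_scale by blast
lemma weyl_neg: "w \<in> W \<Longrightarrow> w (- x) = - w x" using weyl_linear linear_neg by blast

lemma weyl_inner_inv: "w \<in> W \<Longrightarrow> w x \<bullet> y = x \<bullet> inv w y"
  by (metis weyl_inner weyl_inv_r)

lemma finite_weyl: "finite W"
proof -
  have inj: "inj_on (\<lambda>w. restrict w R) W"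
  proof (rule inj_onI)
    fix w u assume w: "w \<in> W" and u: "u \<in> W" and eq: "restrict w R = restrict u R"
    have "\<And>x. x \<in> R \<Longrightarrow> w x = u x" using eq by (metis restrict_apply')
    then have "\<And>x. w x = u x"
      using linear_eq_on_span[OF weyl_linear[OF w] weyl_linear[OF u], of R] spanR by blast
    then show "w = u" by auto
  qed
  have "(\<lambda>w. restrict w R) ` W \<subseteq> PiE R (\<lambda>_. R)"
    using weyl_root by auto
  moreover have "finite (PiE R (\<lambda>_. R))" using finR by (simp add: finite_PiE)
  ultimately show ?thesis using inj finite_imageD finite_subset by metis
qed

lemma weyl_weights: "w \<in> W \<Longrightarrow> x \<in> weights R \<Longrightarrow> w x \<in> weights R"
proof -
  assume w: "w \<in> W" and x: "x \<in> weights R"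
  show ?thesis unfolding weights_def mem_Collect_eq
  proof
    fix \<alpha> assume a: "\<alpha> \<in> R"
    have "inv w \<alpha> \<in> R" using weyl_root weyl_inv_mem w a by blast
    then have "x \<bullet> coroot (inv w \<alpha>) \<in> \<int>" using x by (simp add: weights_def)
    moreover have "w x \<bullet> coroot \<alpha> = x \<bullet> coroot (inv w \<alpha>)"
      by (metis w weyl_coroot weyl_inner weyl_inv_r)
    ultimately show "w x \<bullet> coroot \<alpha> \<in> \<int>" by simp
  qed
qed

lemma roots_weights: "R \<subseteq> weights R" using integ by (auto simp: weights_def)

lemma orbit_iff: "y \<in> orbit R x \<longleftrightarrow> (\<exists>w\<in>W. y = w x)" by (auto simp: orbit_def)

lemma finite_orbit: "finite (orbit R x)" using finite_weyl by (simp add: orbit_def)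

lemma orbit_self: "x \<in> orbit R x"
  unfolding orbit_def by (rule image_eqI[where x=id]) (auto intro: weyl.weyl_id)

lemma orbit_closed: "y \<in> orbit R x \<Longrightarrow> w \<in> W \<Longrightarrow> w y \<in> orbit R x"
  using weyl_comp by (auto simp: orbit_def) (metis comp_apply image_eqI)

lemma orbit_closed_iff: "w \<in> W \<Longrightarrow> w y \<in> orbit R x \<longleftrightarrow> y \<in> orbit R x"
  using orbit_closed weyl_inv_mem weyl_inv_l by metis

lemma orbit_sym: "y \<in> orbit R x \<Longrightarrow> x \<in> orbit R y"
  unfolding orbit_iff using weyl_inv_mem weyl_inv_l by metis

lemma orbit_trans: "y \<in> orbit R x \<Longrightarrow> z \<in> orbit R y \<Longrightarrow> z \<in> orbit R x"
  unfolding orbit_iff using weyl_comp by (metis comp_apply)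

lemma orbit_eq: "y \<in> orbit R x \<Longrightarrow> orbit R y = orbit R x"
  using orbit_trans orbit_sym by blast

lemma orbit_weights: "x \<in> weights R \<Longrightarrow> y \<in> orbit R x \<Longrightarrow> y \<in> weights R"
  using weyl_weights by (auto simp: orbit_iff)

lemma orbit_norm: "y \<in> orbit R x \<Longrightarrow> norm y = norm x"
  using weyl_norm by (auto simp: orbit_iff)

end

context RS begin

definition simple :: "'a set" where
  "simple = {\<alpha>\<in>Rp. \<not> (\<exists>\<beta>\<in>Rp. \<exists>\<gamma>\<in>Rp. \<alpha> = \<beta> + \<gamma>)}"

lemma simple_Rp: "simple \<subseteq> Rp" by (auto simp: simple_def)
lemma finite_simple: "finite simple" using finRp simple_Rp finite_subset by blast

definition nncomb :: "'a \<Rightarrow> bool" where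
  "nncomb x \<longleftrightarrow> (\<exists>c. (\<forall>\<gamma>. 0 \<le> c \<gamma>) \<and> x = (\<Sum>\<gamma>\<in>simple. c \<gamma> *\<^sub>R \<gamma>))"

lemma nncomb_simple: "\<alpha> \<in> simple \<Longrightarrow> nncomb \<alpha>"
  unfolding nncomb_def
  by (rule exI[of _ "\<lambda>\<gamma>. if \<gamma> = \<alpha> then 1 else 0"])
     (simp add: finite_simple if_distrib[of "\<lambda>t. t *\<^sub>R _"] sum.delta cong: if_cong)

lemma nncomb_add: "nncomb x \<Longrightarrow> nncomb y \<Longrightarrow> nncomb (x + y)"
  unfolding nncomb_def
proof (elim exE conjE)
  fix c d assume "\<forall>\<gamma>. 0 \<le> c \<gamma>" "x = (\<Sum>\<gamma>\<in>simple. c \<gamma> *\<^sub>R \<gamma>)" "\<forall>\<gamma>. 0 \<le> d \<gamma>" "y = (\<Sum>\<gamma>\<in>simple. d \<gamma> *\<^sub>R \<gamma>)"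
  then show "\<exists>e. (\<forall>\<gamma>. 0 \<le> e \<gamma>) \<and> x + y = (\<Sum>\<gamma>\<in>simple. e \<gamma> *\<^sub>R \<gamma>)"
    by (intro exI[of _ "\<lambda>\<gamma>. c \<gamma> + d \<gamma>"]) (simp add: scaleR_add_left sum.distrib add_nonneg_nonneg)
qed

lemma Rp_nncomb: "\<alpha> \<in> Rp \<Longrightarrow> nncomb \<alpha>"
proof -
  have "\<forall>\<alpha>\<in>Rp. card {\<beta>\<in>Rp. \<beta> \<bullet> v < \<alpha> \<bullet> v} = n \<longrightarrow> nncomb \<alpha>" for n
  proof (induction n rule: less_induct)
    case (less n)
    show ?case
    proof (intro ballI impI)
      fix \<alpha> assume a: "\<alpha> \<in> Rp" and n: "card {\<beta>\<in>Rp. \<beta> \<bullet> v < \<alpha> \<bullet> v} = n"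
      show "nncomb \<alpha>"
      proof (cases "\<alpha> \<in> simple")
        case True then show ?thesis by (rule nncomb_simple)
      next
        case False
        then obtain \<beta> \<gamma> where bg: "\<beta> \<in> Rp" "\<gamma> \<in> Rp" "\<alpha> = \<beta> + \<gamma>" using a by (auto simp: simple_def)
        have lt: "\<beta> \<bullet> v < \<alpha> \<bullet> v" "\<gamma> \<bullet> v < \<alpha> \<bullet> v" using bg by (auto simp: Rp_iff inner_add_left)
        have "card {\<delta>\<in>Rp. \<delta> \<bullet> v < \<beta> \<bullet> v} < n"
          unfolding n[symmetric] using lt bg finRp by (intro psubset_card_mono) auto
        then have cb: "nncomb \<beta>" using less.IH bg by blast
        have "card {\<delta>\<in>Rp. \<delta> \<bullet> v < \<gamma> \<bullet> v} < n"
          unfolding n[symmetric] using lt bg finRp by (intro psubset_card_mono) auto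
        then have cg: "nncomb \<gamma>" using less.IH bg by blast
        show ?thesis using nncomb_add[OF cb cg] bg by simp
      qed
    qed
  qed
  then show "\<alpha> \<in> Rp \<Longrightarrow> nncomb \<alpha>" by blast
qed

lemma int_pos_cases: "(a::real) \<in> \<int> \<Longrightarrow> a > 0 \<Longrightarrow> a \<ge> 1"
  by (metis Ints_cases of_int_0_less_iff of_int_1_le_iff zero_less_imp_eq_int int_one_le_iff_zero_less)

lemma simple_obtuse:
  assumes a: "\<alpha> \<in> simple" and b: "\<beta> \<in> simple" and ne: "\<alpha> \<noteq> \<beta>"
  shows "\<alpha> \<bullet> \<beta> \<le> 0"
proof (rule ccontr)
  assume pos: "\<not> \<alpha> \<bullet> \<beta> \<le> 0"
  have aR: "\<alpha> \<in> R" and bR: "\<beta> \<in> R" using a b simple_Rp Rp_sub by auto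
  have a0: "\<alpha> \<bullet> \<alpha> > 0" and b0: "\<beta> \<bullet> \<beta> > 0" using zeroR aR bR by auto
  define p where "p = \<beta> \<bullet> coroot \<alpha>"
  define q where "q = \<alpha> \<bullet> coroot \<beta>"
  have pZ: "p \<in> \<int>" and qZ: "q \<in> \<int>" using integ aR bR by (auto simp: p_def q_def)
  have p_eq: "p = 2 * (\<alpha> \<bullet> \<beta>) / (\<alpha> \<bullet> \<alpha>)" unfolding p_def coroot_inner by (simp add: inner_commute)
  have q_eq: "q = 2 * (\<alpha> \<bullet> \<beta>) / (\<beta> \<bullet> \<beta>)" unfolding q_def coroot_inner by simp
  have pp: "p > 0" "q > 0" using pos a0 b0 p_eq q_eq by auto
  then have p1: "p \<ge> 1" "q \<ge> 1" using pZ qZ int_pos_cases by auto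
  have cs: "(\<alpha> \<bullet> \<beta>)^2 \<le> (\<alpha> \<bullet> \<alpha>) * (\<beta> \<bullet> \<beta>)"
    using Cauchy_Schwarz_ineq .
  have pq: "p * q = 4 * (\<alpha> \<bullet> \<beta>)^2 / ((\<alpha> \<bullet> \<alpha>) * (\<beta> \<bullet> \<beta>))"
    using a0 b0 by (simp add: p_eq q_eq power2_eq_square field_simps)
  have pq4: "p * q \<le> 4" unfolding pq using cs a0 b0 by (simp add: field_simps)
  have dec: False if "refl \<alpha> \<beta> \<in> R" "refl \<alpha> \<beta> = \<beta> - \<alpha>" for dummy :: bool
  proof -
    have "\<beta> - \<alpha> \<in> Rp \<or> - (\<beta> - \<alpha>) \<in> Rp" using pos_or_neg that by metis
    then show False
    proof
      assume "\<beta> - \<alpha> \<in> Rp"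
      then have "\<beta> = \<alpha> + (\<beta> - \<alpha>)" "\<alpha> \<in> Rp" using a simple_Rp by auto
      then show False using b \<open>\<beta> - \<alpha> \<in> Rp\<close> unfolding simple_def by blast
    next
      assume "- (\<beta> - \<alpha>) \<in> Rp"
      then have "\<alpha> = \<beta> + (- (\<beta> - \<alpha>))" "\<beta> \<in> Rp" using b simple_Rp by auto
      then show False using a \<open>- (\<beta> - \<alpha>) \<in> Rp\<close> unfolding simple_def by blast
    qed
  qed
  have dec2: False if "refl \<beta> \<alpha> \<in> R" "refl \<beta> \<alpha> = \<alpha> - \<beta>" for dummy :: bool
  proof -
    have "\<alpha> - \<beta> \<in> Rp \<or> - (\<alpha> - \<beta>) \<in> Rp" using pos_or_neg that by metis
    then show False
    proof
      assume "\<alpha> - \<beta> \<in> Rp"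
      then have "\<alpha> = \<beta> + (\<alpha> - \<beta>)" "\<beta> \<in> Rp" using b simple_Rp by auto
      then show False using a \<open>\<alpha> - \<beta> \<in> Rp\<close> unfolding simple_def by blast
    next
      assume "- (\<alpha> - \<beta>) \<in> Rp"
      then have "\<beta> = \<alpha> + (- (\<alpha> - \<beta>))" "\<alpha> \<in> Rp" using a simple_Rp by auto
      then show False using b \<open>- (\<alpha> - \<beta>) \<in> Rp\<close> unfolding simple_def by blast
    qed
  qed
  consider "p = 1" | "q = 1" | "p \<ge> 2" "q \<ge> 2"
  proof -
    have "p = 1 \<or> p \<ge> 2"
    proof -
      obtain k where "p = of_int k" using pZ Ints_cases by blast
      then show ?thesis using p1 by (cases "k = 1") auto
    qed
    moreover have "q = 1 \<or> q \<ge> 2"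
    proof -
      obtain k where "q = of_int k" using qZ Ints_cases by blast
      then show ?thesis using p1 by (cases "k = 1") auto
    qed
    ultimately show ?thesis using that by blast
  qed
  then show False
  proof cases
    case 1
    then have "refl \<alpha> \<beta> = \<beta> - \<alpha>" unfolding refl_def p_def[symmetric] by simp
    then show False using dec refl_mem aR bR by blast
  next
    case 2
    then have "refl \<beta> \<alpha> = \<alpha> - \<beta>" unfolding refl_def q_def[symmetric] by simp
    then show False using dec2 refl_mem aR bR by blast
  next
    case 3
    then have "p * q \<ge> 4" using mult_mono[of 2 p 2 q] by auto
    have "p * q \<ge> p * 2" "p * q \<ge> 2 * q" using 3 mult_left_mono[of 2 q p] mult_right_mono[of 2 p q] by auto
    then have "p = 2" "q = 2" using pq4 3 by linarith+
    then have e1: "\<alpha> \<bullet> \<beta> = \<alpha> \<bullet> \<alpha>" "\<alpha> \<bullet> \<beta> = \<beta> \<bullet> \<beta>" using p_eq q_eq a0 b0 by (auto simp: field_simps)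
    have "(\<alpha> - \<beta>) \<bullet> (\<alpha> - \<beta>) = 0"
      using e1 by (simp add: inner_diff_left inner_diff_right inner_commute)
    then show False using ne by simp
  qed
qed

end

context RS begin

lemma simple_indep: "independent simple"
proof
  assume "dependent simple"
  then obtain u where u: "\<exists>x\<in>simple. u x \<noteq> 0" "(\<Sum>x\<in>simple. u x *\<^sub>R x) = 0"
    using dependent_finite[OF finite_simple] by auto
  define P where "P = {x\<in>simple. u x > 0}"
  define N where "N = {x\<in>simple. u x < 0}"
  define Z where "Z = {x\<in>simple. u x = 0}"
  have fin: "finite P" "finite N" "finite Z" using finite_simple by (auto simp: P_def N_def Z_def)
  have split: "simple = P \<union> N \<union> Z" by (auto simp: P_def N_def Z_def)
  have disj: "P \<inter> N = {}" "(P \<union> N) \<inter> Z = {}" by (auto simp: P_def N_def Z_def)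
  have "(\<Sum>x\<in>simple. u x *\<^sub>R x) = (\<Sum>x\<in>P. u x *\<^sub>R x) + (\<Sum>x\<in>N. u x *\<^sub>R x) + (\<Sum>x\<in>Z. u x *\<^sub>R x)"
    unfolding split using fin disj by (simp add: sum.union_disjoint)
  moreover have "(\<Sum>x\<in>Z. u x *\<^sub>R x) = 0" by (simp add: Z_def)
  ultimately have eq: "(\<Sum>x\<in>P. u x *\<^sub>R x) = (\<Sum>x\<in>N. (- u x) *\<^sub>R x)"
    using u(2) by (simp add: sum_negf eq_neg_iff_add_eq_0)
  define e where "e = (\<Sum>x\<in>P. u x *\<^sub>R x)"
  have "e \<bullet> e = (\<Sum>x\<in>P. u x *\<^sub>R x) \<bullet> (\<Sum>y\<in>N. (- u y) *\<^sub>R y)" using eq e_def by simp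
  also have "\<dots> = (\<Sum>x\<in>P. \<Sum>y\<in>N. (u x * (- u y)) * (x \<bullet> y))"
    apply (simp only: inner_sum_left inner_sum_right inner_scaleR_left inner_scaleR_right)
    apply (simp add: sum_distrib_left sum_negf mult_ac)
    apply (subst sum.swap)
    apply (simp add: mult_ac)
    done
  also have "\<dots> \<le> 0"
  proof (intro sum_nonpos)
    fix x y assume x: "x \<in> P" and y: "y \<in> N"
    then have "x \<noteq> y" "x \<in> simple" "y \<in> simple" using disj by (auto simp: P_def N_def)
    then have "x \<bullet> y \<le> 0" using simple_obtuse by blast
    moreover have "u x * (- u y) > 0" using x y unfolding P_def N_def by (intro mult_pos_pos) auto
    ultimately show "u x * - u y * (x \<bullet> y) \<le> 0" by (intro mult_nonneg_nonpos) auto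
  qed
  finally have "e \<bullet> e \<le> 0" .
  then have e0: "e = 0" by (metis inner_eq_zero_iff inner_ge_zero order_antisym)
  have Pe: "P = {}"
  proof (rule ccontr)
    assume "P \<noteq> {}"
    have "e \<bullet> v = (\<Sum>x\<in>P. u x * (x \<bullet> v))" by (simp add: e_def inner_sum_left)
    also have "\<dots> > 0"
      using \<open>P \<noteq> {}\<close> fin(1) simple_Rp by (intro sum_pos) (auto simp: P_def Rp_iff)
    finally show False using e0 by simp
  qed
  have Ne: "N = {}"
  proof (rule ccontr)
    assume "N \<noteq> {}"
    have "e \<bullet> v = (\<Sum>x\<in>N. (- u x) * (x \<bullet> v))" using eq by (simp add: e_def inner_sum_left)
    also have "\<dots> > 0"
      using \<open>N \<noteq> {}\<close> fin(2) simple_Rp by (intro sum_pos) (auto simp: N_def Rp_iff subset_iff intro!: mult_neg_pos)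
    finally show False using e0 by simp
  qed
  show False using u(1) Pe Ne by (auto simp: P_def N_def) (meson linorder_neqE_linordered_idom)
qed

end

context RS begin

lemma indep_coeffs:
  assumes "(\<Sum>x\<in>simple. u x *\<^sub>R x) = 0" "x \<in> simple" shows "u x = 0"
  using simple_indep dependent_finite[OF finite_simple] assms by auto

lemma refl_simple_pos:
  assumes a: "\<alpha> \<in> simple" and b: "\<beta> \<in> Rp" and nm: "\<forall>c. \<beta> \<noteq> c *\<^sub>R \<alpha>"
  shows "refl \<alpha> \<beta> \<in> Rp"
proof (rule ccontr)
  assume nr: "refl \<alpha> \<beta> \<notin> Rp"
  have aR: "\<alpha> \<in> R" and bR: "\<beta> \<in> R" using a b simple_Rp Rp_sub by auto
  have "- refl \<alpha> \<beta> \<in> Rp" using pos_or_neg[OF refl_mem[OF aR bR]] nr by blast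
  then obtain d where d: "\<forall>\<gamma>. 0 \<le> d \<gamma>" "- refl \<alpha> \<beta> = (\<Sum>\<gamma>\<in>simple. d \<gamma> *\<^sub>R \<gamma>)"
    using Rp_nncomb unfolding nncomb_def by blast
  obtain b' where bb: "\<forall>\<gamma>. 0 \<le> b' \<gamma>" "\<beta> = (\<Sum>\<gamma>\<in>simple. b' \<gamma> *\<^sub>R \<gamma>)"
    using Rp_nncomb[OF b] unfolding nncomb_def by blast
  define t where "t = \<beta> \<bullet> coroot \<alpha>"
  have "refl \<alpha> \<beta> = \<beta> - t *\<^sub>R \<alpha>" by (simp add: refl_def t_def)
  have tsum: "t *\<^sub>R \<alpha> = (\<Sum>\<gamma>\<in>simple. (if \<gamma> = \<alpha> then t else 0) *\<^sub>R \<gamma>)"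
    using a finite_simple by (simp add: if_distrib[of "\<lambda>s. s *\<^sub>R _"] sum.delta cong: if_cong)
  have "(\<Sum>\<gamma>\<in>simple. (b' \<gamma> + d \<gamma> - (if \<gamma> = \<alpha> then t else 0)) *\<^sub>R \<gamma>) =
        (\<Sum>\<gamma>\<in>simple. b' \<gamma> *\<^sub>R \<gamma>) + (\<Sum>\<gamma>\<in>simple. d \<gamma> *\<^sub>R \<gamma>) - (\<Sum>\<gamma>\<in>simple. (if \<gamma> = \<alpha> then t else 0) *\<^sub>R \<gamma>)"
    by (simp only: scaleR_diff_left scaleR_add_left sum.distrib sum_subtractf)
  also have "\<dots> = \<beta> + (- refl \<alpha> \<beta>) - t *\<^sub>R \<alpha>"
    by (simp only: bb(2)[symmetric] d(2)[symmetric] tsum[symmetric])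
  also have "\<dots> = 0" using \<open>refl \<alpha> \<beta> = \<beta> - t *\<^sub>R \<alpha>\<close> by simp
  finally have z: "\<And>\<gamma>. \<gamma> \<in> simple \<Longrightarrow> b' \<gamma> + d \<gamma> - (if \<gamma> = \<alpha> then t else 0) = 0"
    using indep_coeffs[where u="\<lambda>\<gamma>. b' \<gamma> + d \<gamma> - (if \<gamma> = \<alpha> then t else 0)"] by blast
  have "b' \<gamma> = 0" if "\<gamma> \<in> simple" "\<gamma> \<noteq> \<alpha>" for \<gamma>
  proof -
    have "b' \<gamma> + d \<gamma> = 0" using z[OF that(1)] that(2) by simp
    moreover have "0 \<le> b' \<gamma>" "0 \<le> d \<gamma>" using bb(1) d(1) by auto
    ultimately show ?thesis by linarith
  qed
  then have "\<beta> = (\<Sum>\<gamma>\<in>simple. (if \<gamma> = \<alpha> then b' \<alpha> else 0) *\<^sub>R \<gamma>)"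
    unfolding bb(2) by (intro sum.cong) auto
  also have "\<dots> = b' \<alpha> *\<^sub>R \<alpha>"
    using a finite_simple by (simp add: if_distrib[of "\<lambda>s. s *\<^sub>R _"] sum.delta cong: if_cong)
  finally show False using nm by blast
qed

end

context RS begin

fun wf :: "'a list \<Rightarrow> 'a \<Rightarrow> 'a" where
  "wf [] x = x"
| "wf (a # l) x = refl a (wf l x)"

lemma wf_append: "wf (l1 @ l2) x = wf l1 (wf l2 x)"
  by (induction l1) auto

lemma wf_Cons: "wf (a # l) = refl a \<circ> wf l"
  by (rule ext) simp

lemma wf_weyl: "set l \<subseteq> R \<Longrightarrow> wf l \<in> W"
proof (induction l)
  case Nil
  have "wf [] = id" by (rule ext) simp
  then show ?case using weyl.weyl_id[of R] by metis
next
  case (Cons a l) then have "wf l \<in> W" "a \<in> R" by auto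
  then show ?case unfolding wf_Cons by (rule weyl.weyl_step)
qed

lemma wf_rev_apply: "set l \<subseteq> R \<Longrightarrow> wf (rev l) (wf l x) = x"
proof (induction l arbitrary: x)
  case Nil then show ?case by simp
next
  case (Cons a l)
  have a: "a \<noteq> 0" using Cons.prems zeroR by auto
  have "wf (rev (a # l)) (wf (a # l) x) = wf (rev l) (refl a (refl a (wf l x)))"
    by (simp add: wf_append)
  also have "\<dots> = x" using Cons refl_refl[OF a] by simp
  finally show ?case .
qed

lemma wf_rev_apply2: "set l \<subseteq> R \<Longrightarrow> wf l (wf (rev l) x) = x"
  using wf_rev_apply[of "rev l"] by simp

lemma simple_R: "simple \<subseteq> R" using simple_Rp Rp_sub by blast

end

context RS begin

lemma refl_gen: "\<beta> \<in> R \<Longrightarrow> \<exists>l. set l \<subseteq> simple \<and> refl \<beta> = wf l"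
proof -
  have pos: "\<exists>l. set l \<subseteq> simple \<and> refl \<beta> = wf l" if b: "\<beta> \<in> Rp" for \<beta>
  proof -
    define A where "A = {\<gamma>\<in>Rp. \<exists>l. set l \<subseteq> simple \<and> \<gamma> = wf l \<beta>}"
    have "\<beta> \<in> A" using b by (auto simp: A_def intro!: exI[of _ "[]"])
    have finA: "finite A" using finRp by (auto simp: A_def)
    define m where "m = Min ((\<lambda>\<gamma>. \<gamma> \<bullet> v) ` A)"
    have "m \<in> (\<lambda>\<gamma>. \<gamma> \<bullet> v) ` A" unfolding m_def using finA \<open>\<beta> \<in> A\<close> by (intro Min_in) auto
    then obtain \<gamma> where g: "\<gamma> \<in> A" "\<gamma> \<bullet> v = m" by auto
    have gmin: "\<And>\<gamma>'. \<gamma>' \<in> A \<Longrightarrow> \<gamma> \<bullet> v \<le> \<gamma>' \<bullet> v" unfolding g(2) m_def using finA by auto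
    obtain l where l: "set l \<subseteq> simple" "\<gamma> = wf l \<beta>" and gRp: "\<gamma> \<in> Rp" using g(1) by (auto simp: A_def)
    have "\<exists>\<alpha>\<in>simple. \<exists>c. \<gamma> = c *\<^sub>R \<alpha>"
    proof (rule ccontr)
      assume nm: "\<not> ?thesis"
      obtain c where c: "\<forall>\<delta>. 0 \<le> c \<delta>" "\<gamma> = (\<Sum>\<delta>\<in>simple. c \<delta> *\<^sub>R \<delta>)"
        using Rp_nncomb[OF gRp] unfolding nncomb_def by blast
      have "0 < \<gamma> \<bullet> \<gamma>" using zeroR gRp Rp_sub by auto
      also have "\<gamma> \<bullet> \<gamma> = (\<Sum>\<delta>\<in>simple. c \<delta> * (\<delta> \<bullet> \<gamma>))"
        by (subst (1) c(2)) (simp add: inner_sum_left)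
      finally have "0 < (\<Sum>\<delta>\<in>simple. c \<delta> * (\<delta> \<bullet> \<gamma>))" .
      then obtain \<delta> where d: "\<delta> \<in> simple" "c \<delta> * (\<delta> \<bullet> \<gamma>) > 0"
      proof -
        assume r: "\<And>\<delta>. \<delta> \<in> simple \<Longrightarrow> 0 < c \<delta> * (\<delta> \<bullet> \<gamma>) \<Longrightarrow> thesis"
        show thesis
        proof (rule ccontr)
          assume "\<not> thesis"
          then have "\<And>\<delta>. \<delta> \<in> simple \<Longrightarrow> c \<delta> * (\<delta> \<bullet> \<gamma>) \<le> 0" using r by force
          then have "(\<Sum>\<delta>\<in>simple. c \<delta> * (\<delta> \<bullet> \<gamma>)) \<le> 0" by (rule sum_nonpos)
          then show False using \<open>0 < (\<Sum>\<delta>\<in>simple. c \<delta> * (\<delta> \<bullet> \<gamma>))\<close> by simp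
        qed
      qed
      have dg: "\<delta> \<bullet> \<gamma> > 0"
      proof (rule ccontr)
        assume "\<not> \<delta> \<bullet> \<gamma> > 0"
        then have "c \<delta> * (\<delta> \<bullet> \<gamma>) \<le> 0" using c(1) by (intro mult_nonneg_nonpos) auto
        then show False using d(2) by simp
      qed
      have "refl \<delta> \<gamma> \<in> Rp" using refl_simple_pos[OF d(1) gRp] nm d(1) by blast
      moreover have "refl \<delta> \<gamma> = wf (\<delta> # l) \<beta>" using l by simp
      ultimately have inA: "refl \<delta> \<gamma> \<in> A" using l d(1) unfolding A_def by (intro CollectI conjI exI[of _ "\<delta> # l"]) auto
      have "refl \<delta> \<gamma> \<bullet> v = \<gamma> \<bullet> v - (\<gamma> \<bullet> coroot \<delta>) * (\<delta> \<bullet> v)"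
        by (simp add: refl_def inner_diff_left)
      moreover have "\<gamma> \<bullet> coroot \<delta> > 0"
      proof -
        have "\<delta> \<noteq> 0" using zeroR d(1) simple_R by auto
        then have "\<delta> \<bullet> \<delta> > 0" by simp
        then show ?thesis using dg unfolding coroot_inner by (simp add: inner_commute)
      qed
      moreover have "\<delta> \<bullet> v > 0" using d(1) simple_Rp by (auto simp: Rp_iff)
      ultimately have "refl \<delta> \<gamma> \<bullet> v < \<gamma> \<bullet> v" by simp
      then show False using gmin[OF inA] by simp
    qed
    then obtain \<alpha> c where ac: "\<alpha> \<in> simple" "\<gamma> = c *\<^sub>R \<alpha>" by blast
    have "c \<noteq> 0" using ac zeroR gRp Rp_sub by (metis scale_zero_left subsetD)
    then have rg: "refl \<gamma> = refl \<alpha>" using ac refl_scale_root by simp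
    have lR: "set l \<subseteq> R" "set (rev l) \<subseteq> R" using l simple_R by auto
    have bg: "\<beta> = wf (rev l) \<gamma>" using l wf_rev_apply lR by simp
    have ow: "orth (wf (rev l))" using wf_weyl[OF lR(2)] weyl_orth by blast
    have "refl \<beta> = wf (rev l @ [\<alpha>] @ l)"
    proof
      fix x
      have "refl \<beta> x = refl (wf (rev l) \<gamma>) (wf (rev l) (wf l x))" using bg wf_rev_apply[OF lR(1)] by simp
      also have "\<dots> = wf (rev l) (refl \<gamma> (wf l x))" using orth_refl_conj[OF ow] by simp
      also have "\<dots> = wf (rev l @ [\<alpha>] @ l) x" using rg by (simp add: wf_append)
      finally show "refl \<beta> x = wf (rev l @ [\<alpha>] @ l) x" .
    qed
    moreover have "set (rev l @ [\<alpha>] @ l) \<subseteq> simple" using l ac by auto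
    ultimately show ?thesis by blast
  qed
  assume b: "\<beta> \<in> R"
  show ?thesis
  proof (cases "\<beta> \<in> Rp")
    case True then show ?thesis using pos by blast
  next
    case False
    then have "- \<beta> \<in> Rp" using pos_or_neg b by blast
    moreover have "refl (- \<beta>) = refl \<beta>" using refl_scale_root[of "-1" \<beta>] by simp
    ultimately show ?thesis using pos by metis
  qed
qed

lemma weyl_words: "w \<in> W \<Longrightarrow> \<exists>l. set l \<subseteq> simple \<and> w = wf l"
proof (induction rule: weyl.induct)
  case weyl_id
  have "id = wf []" by (rule ext) simp
  then show ?case by (intro exI[of _ "[]"]) simp
next
  case (weyl_step w \<alpha>)
  then obtain l where l: "set l \<subseteq> simple" "w = wf l" by blast
  obtain l' where l': "set l' \<subseteq> simple" "refl \<alpha> = wf l'" using refl_gen weyl_step by blast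
  have "refl \<alpha> \<circ> w = wf (l' @ l)"
  proof
    fix x show "(refl \<alpha> \<circ> w) x = wf (l' @ l) x" using l(2) l'(2) by (simp add: wf_append)
  qed
  moreover have "set (l' @ l) \<subseteq> simple" using l l' by auto
  ultimately show ?case by blast
qed

end

context RS begin

definition Cd :: "'a \<Rightarrow> bool" where "Cd x \<longleftrightarrow> (\<forall>\<alpha>\<in>Rp. 0 \<le> x \<bullet> \<alpha>)"

lemma exists_switch: "P n \<Longrightarrow> \<not> P 0 \<Longrightarrow> \<exists>j<n. \<not> P j \<and> P (Suc j)"
proof (induction n)
  case 0 then show ?case by simp
next
  case (Suc n)
  show ?case
  proof (cases "P n")
    case True then show ?thesis using Suc by (meson less_SucI)
  next
    case False then show ?thesis using Suc by blast
  qed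
qed

lemma uniq_word: "set l \<subseteq> simple \<Longrightarrow> Cd x \<Longrightarrow> Cd (wf l x) \<Longrightarrow> wf l x = x"
proof (induction "length l" arbitrary: l rule: less_induct)
  case less
  show ?case
  proof (cases l rule: rev_cases)
    case Nil then show ?thesis by simp
  next
    case (snoc l' a)
    have aS: "a \<in> simple" and l'S: "set l' \<subseteq> simple" using less.prems snoc by auto
    have aR: "a \<in> R" "a \<in> Rp" using aS simple_R simple_Rp by auto
    have a0: "a \<noteq> 0" using zeroR aR by auto
    have l'R: "set l' \<subseteq> R" using l'S simple_R by auto
    have lR: "set l \<subseteq> R" using less.prems simple_R by auto
    have wl: "\<And>y. wf l y = wf l' (refl a y)" using snoc by (simp add: wf_append)
    have uW: "wf l' \<in> W" using wf_weyl[OF l'R] .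
    have wW: "wf l \<in> W" using wf_weyl[OF lR] .
    have wa: "wf l a = - wf l' a" using wl refl_self[OF a0] weyl_neg[OF uW] by simp
    have uaR: "wf l' a \<in> R" using weyl_root[OF uW aR(1)] .
    show ?thesis
    proof (cases "wf l' a \<in> Rp")
      case True
      have "0 \<le> x \<bullet> a" using less.prems(2) aR(2) by (simp add: Cd_def)
      moreover have "0 \<le> wf l x \<bullet> wf l' a" using less.prems(3) True by (simp add: Cd_def)
      moreover have "wf l x \<bullet> wf l' a = - (x \<bullet> a)"
        using weyl_inner[OF wW, of x a] wa by simp
      ultimately have "x \<bullet> a = 0" by simp
      then have "refl a x = x" by (simp add: refl_def coroot_inner)
      then have "wf l x = wf l' x" using wl by simp
      moreover have "wf l' x = x"
        using less.hyps[of l'] snoc l'S less.prems(2,3) \<open>wf l x = wf l' x\<close> by simp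
      ultimately show ?thesis by simp
    next
      case False
      define \<gamma> where "\<gamma> j = wf (drop j l') a" for j
      have "\<gamma> (length l') \<in> Rp" using aR by (simp add: \<gamma>_def)
      moreover have "\<gamma> 0 \<notin> Rp" using False by (simp add: \<gamma>_def)
      ultimately obtain j where j: "j < length l'" "\<gamma> j \<notin> Rp" "\<gamma> (Suc j) \<in> Rp"
        using exists_switch[of "\<lambda>j. \<gamma> j \<in> Rp"] by blast
      define b where "b = l' ! j"
      have dj: "drop j l' = b # drop (Suc j) l'" using j(1) by (simp add: b_def Cons_nth_drop_Suc)
      have bS: "b \<in> simple" using j(1) l'S by (auto simp: b_def)
      have gj: "\<gamma> j = refl b (\<gamma> (Suc j))" by (simp add: \<gamma>_def dj)
      have "\<exists>c. \<gamma> (Suc j) = c *\<^sub>R b"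
        using refl_simple_pos[OF bS j(3)] j(2) gj by auto
      then obtain c where c: "\<gamma> (Suc j) = c *\<^sub>R b" by blast
      have "c \<noteq> 0" using c j(3) zeroR Rp_sub by (metis scale_zero_left subsetD)
      then have rb: "refl b = refl (\<gamma> (Suc j))" using c refl_scale_root by metis
      define u where "u = wf (drop (Suc j) l')"
      have uW': "u \<in> W" unfolding u_def using l'R by (intro wf_weyl) (meson in_set_dropD subset_iff)
      have l'split: "l' = take j l' @ b # drop (Suc j) l'" using dj by (metis append_take_drop_id)
      define l2 where "l2 = take j l' @ drop (Suc j) l'"
      have eq: "wf l y = wf l2 y" for y
      proof -
        have "wf l y = wf (take j l') (refl b (u (refl a y)))"
          using wl l'split by (metis wf_append wf.simps(2) u_def)
        also have "refl b (u (refl a y)) = refl (u a) (u (refl a y))"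
          using rb by (simp add: \<gamma>_def u_def)
        also have "\<dots> = u (refl a (refl a y))" using weyl_conj[OF uW'] by simp
        also have "\<dots> = u y" using refl_refl[OF a0] by simp
        finally show ?thesis by (simp add: l2_def wf_append u_def)
      qed
      have "length l2 < length l" using j(1) snoc by (simp add: l2_def)
      moreover have "set l2 \<subseteq> simple" using l'S by (auto simp: l2_def dest: in_set_takeD in_set_dropD)
      ultimately have "wf l2 x = x" using less.hyps less.prems(2,3) eq by metis
      then show ?thesis using eq by simp
    qed
  qed
qed

lemma dom_unique: "w \<in> W \<Longrightarrow> Cd x \<Longrightarrow> Cd (w x) \<Longrightarrow> w x = x"
  using weyl_words uniq_word by metis

end

context RS begin

lemma coroot_pos_iff: "\<alpha> \<in> R \<Longrightarrow> (0 \<le> x \<bullet> coroot \<alpha>) \<longleftrightarrow> (0 \<le> x \<bullet> \<alpha>)"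
proof -
  assume "\<alpha> \<in> R"
  then have p: "2 / (\<alpha> \<bullet> \<alpha>) > 0" using zeroR by auto
  have "x \<bullet> coroot \<alpha> = (x \<bullet> \<alpha>) * (2 / (\<alpha> \<bullet> \<alpha>))" by (simp add: coroot_inner)
  moreover have "\<And>t c::real. c > 0 \<Longrightarrow> (0 \<le> t * c) = (0 \<le> t)" by (simp add: zero_le_mult_iff)
  ultimately show ?thesis using p by metis
qed

lemma coroot_neg_iff: "\<alpha> \<in> R \<Longrightarrow> (x \<bullet> coroot \<alpha> < 0) \<longleftrightarrow> (x \<bullet> \<alpha> < 0)"
  using coroot_pos_iff by (meson not_le)

lemma dominant_iff: "la \<in> dominant R v \<longleftrightarrow> la \<in> weights R \<and> Cd la"
  unfolding dominant_def Cd_def using coroot_pos_iff Rp_sub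
  by (auto simp: inner_commute)

lemma dom_orbit_unique:
  assumes "la \<in> dominant R v" "mu \<in> dominant R v" "mu \<in> orbit R la"
  shows "mu = la"
proof -
  obtain w where "w \<in> W" "mu = w la" using assms(3) by (auto simp: orbit_iff)
  then show ?thesis using dom_unique assms(1,2) dominant_iff by metis
qed

lemma pos_cone_iff: "x \<in> pos_cone R v \<longleftrightarrow> (\<exists>c::'a \<Rightarrow> nat. x = (\<Sum>\<alpha>\<in>Rp. real (c \<alpha>) *\<^sub>R \<alpha>))"
  by (simp add: pos_cone_def)

lemma pos_cone_0: "0 \<in> pos_cone R v"
  unfolding pos_cone_iff by (intro exI[of _ "\<lambda>_. 0"]) simp

lemma pos_cone_add: "x \<in> pos_cone R v \<Longrightarrow> y \<in> pos_cone R v \<Longrightarrow> x + y \<in> pos_cone R v"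
  unfolding pos_cone_iff
proof (elim exE)
  fix c d assume "x = (\<Sum>\<alpha>\<in>Rp. real (c \<alpha>) *\<^sub>R \<alpha>)" "y = (\<Sum>\<alpha>\<in>Rp. real (d \<alpha>) *\<^sub>R \<alpha>)"
  then show "\<exists>e::'a\<Rightarrow>nat. x + y = (\<Sum>\<alpha>\<in>Rp. real (e \<alpha>) *\<^sub>R \<alpha>)"
    by (intro exI[of _ "\<lambda>\<alpha>. c \<alpha> + d \<alpha>"]) (simp add: scaleR_add_left sum.distrib)
qed

lemma pos_cone_root: "\<alpha> \<in> Rp \<Longrightarrow> real k *\<^sub>R \<alpha> \<in> pos_cone R v"
  unfolding pos_cone_iff
  by (intro exI[of _ "\<lambda>\<beta>. if \<beta> = \<alpha> then k else 0"])
     (simp add: finRp if_distrib[of "\<lambda>t. real t *\<^sub>R _"] sum.delta cong: if_cong)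

lemma pos_cone_v: "x \<in> pos_cone R v \<Longrightarrow> 0 \<le> x \<bullet> v"
  unfolding pos_cone_iff
  by (auto simp: inner_sum_left Rp_iff intro!: sum_nonneg)

lemma pos_cone_neg_root: "\<alpha> \<in> Rp \<Longrightarrow> k > 0 \<Longrightarrow> - (real k *\<^sub>R \<alpha>) \<notin> pos_cone R v"
proof
  assume "\<alpha> \<in> Rp" "k > 0" "- (real k *\<^sub>R \<alpha>) \<in> pos_cone R v"
  then have "0 \<le> - (real k * (\<alpha> \<bullet> v))" using pos_cone_v by fastforce
  moreover have "real k * (\<alpha> \<bullet> v) > 0" using \<open>\<alpha> \<in> Rp\<close> \<open>k > 0\<close> by (simp add: Rp_iff)
  ultimately show False by simp
qed

lemma weight_coroot_int: "x \<in> weights R \<Longrightarrow> \<alpha> \<in> R \<Longrightarrow> x \<bullet> coroot \<alpha> \<in> \<int>"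
  by (simp add: weights_def)

lemma climb:
  assumes la: "la \<in> dominant R v" and x: "x \<in> orbit R la"
  shows "la - x \<in> pos_cone R v"
proof -
  define A where "A = {y \<in> orbit R la. y - x \<in> pos_cone R v}"
  have xA: "x \<in> A" using x pos_cone_0 by (simp add: A_def)
  have finA: "finite A" using finite_orbit by (simp add: A_def)
  define m where "m = Max ((\<lambda>y. y \<bullet> v) ` A)"
  have "m \<in> (\<lambda>y. y \<bullet> v) ` A" unfolding m_def using finA xA by (intro Max_in) auto
  then obtain y where y: "y \<in> A" "y \<bullet> v = m" by auto
  have ymax: "\<And>y'. y' \<in> A \<Longrightarrow> y' \<bullet> v \<le> y \<bullet> v" unfolding y(2) m_def using finA by auto
  have yo: "y \<in> orbit R la" and yx: "y - x \<in> pos_cone R v" using y(1) by (auto simp: A_def)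
  have lw: "la \<in> weights R" using la dominant_iff by blast
  have yw: "y \<in> weights R" using orbit_weights[OF lw yo] .
  have "Cd y"
  unfolding Cd_def
  proof
    fix \<alpha> assume a: "\<alpha> \<in> Rp"
    then have aR: "\<alpha> \<in> R" using Rp_sub by auto
    show "0 \<le> y \<bullet> \<alpha>"
    proof (rule ccontr)
      assume "\<not> 0 \<le> y \<bullet> \<alpha>"
      then have neg: "y \<bullet> coroot \<alpha> < 0" using coroot_neg_iff[OF aR] by simp
      obtain k where k: "y \<bullet> coroot \<alpha> = of_int k" using weight_coroot_int[OF yw aR] Ints_cases by blast
      define n where "n = nat (- k)"
      have n: "real n = - (y \<bullet> coroot \<alpha>)" "n > 0" using k neg by (auto simp: n_def)
      have ry: "refl \<alpha> y = y + real n *\<^sub>R \<alpha>" using n by (simp add: refl_def)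
      have "refl \<alpha> y \<in> orbit R la" using orbit_closed[OF yo weyl_refl[OF aR]] .
      moreover have "refl \<alpha> y - x \<in> pos_cone R v"
        using pos_cone_add[OF yx pos_cone_root[OF a, of n]] ry by (simp add: algebra_simps)
      ultimately have "refl \<alpha> y \<in> A" by (simp add: A_def)
      then have "refl \<alpha> y \<bullet> v \<le> y \<bullet> v" using ymax by blast
      moreover have "refl \<alpha> y \<bullet> v > y \<bullet> v"
      proof -
        have "refl \<alpha> y \<bullet> v = y \<bullet> v - (y \<bullet> coroot \<alpha>) * (\<alpha> \<bullet> v)" by (simp add: refl_def inner_diff_left)
        moreover have "(y \<bullet> coroot \<alpha>) * (\<alpha> \<bullet> v) < 0" using neg a by (simp add: Rp_iff mult_neg_pos)
        ultimately show ?thesis by simp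
      qed
      ultimately show False by simp
    qed
  qed
  then have "y \<in> dominant R v" using yw dominant_iff by blast
  then have "y = la" using dom_orbit_unique[OF la _ yo] by blast
  then show ?thesis using yx by simp
qed

lemma exists_dominant:
  assumes x: "x \<in> weights R"
  shows "\<exists>mu\<in>dominant R v. x \<in> orbit R mu"
proof -
  define A where "A = orbit R x"
  have xA: "x \<in> A" using orbit_self by (simp add: A_def)
  have finA: "finite A" using finite_orbit by (simp add: A_def)
  define m where "m = Max ((\<lambda>y. y \<bullet> v) ` A)"
  have "m \<in> (\<lambda>y. y \<bullet> v) ` A" unfolding m_def using finA xA by (intro Max_in) auto
  then obtain y where y: "y \<in> A" "y \<bullet> v = m" by auto
  have ymax: "\<And>y'. y' \<in> A \<Longrightarrow> y' \<bullet> v \<le> y \<bullet> v" unfolding y(2) m_def using finA by auto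
  have yo: "y \<in> orbit R x" using y(1) by (simp add: A_def)
  have yw: "y \<in> weights R" using orbit_weights[OF x yo] .
  have "Cd y"
  unfolding Cd_def
  proof
    fix \<alpha> assume a: "\<alpha> \<in> Rp"
    then have aR: "\<alpha> \<in> R" using Rp_sub by auto
    show "0 \<le> y \<bullet> \<alpha>"
    proof (rule ccontr)
      assume "\<not> 0 \<le> y \<bullet> \<alpha>"
      then have neg: "y \<bullet> coroot \<alpha> < 0" using coroot_neg_iff[OF aR] by simp
      have ry: "refl \<alpha> y = y + (- (y \<bullet> coroot \<alpha>)) *\<^sub>R \<alpha>" by (simp add: refl_def)
      have "refl \<alpha> y \<in> A" using orbit_closed[OF yo weyl_refl[OF aR]] by (simp add: A_def)
      then have "refl \<alpha> y \<bullet> v \<le> y \<bullet> v" using ymax by blast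
      moreover have "refl \<alpha> y \<bullet> v > y \<bullet> v"
      proof -
        have "refl \<alpha> y \<bullet> v = y \<bullet> v - (y \<bullet> coroot \<alpha>) * (\<alpha> \<bullet> v)" by (simp add: refl_def inner_diff_left)
        moreover have "(y \<bullet> coroot \<alpha>) * (\<alpha> \<bullet> v) < 0" using neg a by (simp add: Rp_iff mult_neg_pos)
        ultimately show ?thesis by simp
      qed
      ultimately show False by simp
    qed
  qed
  then have "y \<in> dominant R v" using yw dominant_iff by blast
  moreover have "x \<in> orbit R y" using orbit_sym[OF yo] .
  ultimately show ?thesis by blast
qed

end

context RS begin

lemma Cd_add: "Cd x \<Longrightarrow> Cd y \<Longrightarrow> Cd (x + y)"
  by (auto simp: Cd_def inner_add_left)

lemma norm_le_dom:
  assumes la: "la \<in> dominant R v" and mu: "mu \<in> dominant R v" and d: "la - mu \<in> pos_cone R v"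
  shows "norm mu \<le> norm la"
proof -
  obtain c :: "'a \<Rightarrow> nat" where c: "la - mu = (\<Sum>\<alpha>\<in>Rp. real (c \<alpha>) *\<^sub>R \<alpha>)" using d pos_cone_iff by blast
  have C: "Cd (la + mu)" using la mu dominant_iff Cd_add by blast
  have "(la - mu) \<bullet> (la + mu) = (\<Sum>\<alpha>\<in>Rp. real (c \<alpha>) * (\<alpha> \<bullet> (la + mu)))"
    unfolding c by (simp add: inner_sum_left)
  also have "\<dots> \<ge> 0" using C by (intro sum_nonneg) (auto simp: Cd_def inner_commute)
  finally have "0 \<le> (la - mu) \<bullet> (la + mu)" .
  moreover have "(la - mu) \<bullet> (la + mu) = la \<bullet> la - mu \<bullet> mu"
    by (simp add: inner_diff_left inner_diff_right inner_add_right inner_add_left inner_commute)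
  ultimately have "mu \<bullet> mu \<le> la \<bullet> la" by simp
  then show ?thesis by (simp add: norm_eq_sqrt_inner)
qed

lemma finite_below:
  assumes la: "la \<in> dominant R v"
  shows "finite {mu \<in> dominant R v. dom_less R v mu la}"
proof -
  define B where "B \<alpha> = nat \<lceil>2 * norm la * norm v / (\<alpha> \<bullet> v)\<rceil>" for \<alpha>
  define f where "f c = la - (\<Sum>\<alpha>\<in>Rp. real (c \<alpha>) *\<^sub>R \<alpha>)" for c :: "'a \<Rightarrow> nat"
  have "{mu \<in> dominant R v. dom_less R v mu la} \<subseteq> f ` (PiE Rp (\<lambda>\<alpha>. {0..B \<alpha>}))"
  proof
    fix mu assume "mu \<in> {mu \<in> dominant R v. dom_less R v mu la}"
    then have mu: "mu \<in> dominant R v" "la - mu \<in> pos_cone R v" by (auto simp: dom_less_def dom_le_def)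
    obtain c :: "'a \<Rightarrow> nat" where c: "la - mu = (\<Sum>\<alpha>\<in>Rp. real (c \<alpha>) *\<^sub>R \<alpha>)" using mu(2) pos_cone_iff by blast
    have nm: "norm mu \<le> norm la" using norm_le_dom[OF la mu] .
    have bound: "(la - mu) \<bullet> v \<le> 2 * norm la * norm v"
    proof -
      have "(la - mu) \<bullet> v \<le> norm (la - mu) * norm v" using norm_cauchy_schwarz by blast
      also have "\<dots> \<le> (norm la + norm mu) * norm v" by (intro mult_right_mono norm_triangle_ineq4) auto
      also have "\<dots> \<le> 2 * norm la * norm v" using nm by (intro mult_right_mono) auto
      finally show ?thesis .
    qed
    have cb: "c \<alpha> \<le> B \<alpha>" if a: "\<alpha> \<in> Rp" for \<alpha>
    proof -
      have av: "\<alpha> \<bullet> v > 0" using a by (simp add: Rp_iff)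
      have "real (c \<alpha>) * (\<alpha> \<bullet> v) \<le> (\<Sum>\<beta>\<in>Rp. real (c \<beta>) * (\<beta> \<bullet> v))"
        using a finRp by (intro member_le_sum) (auto simp: Rp_iff)
      also have "\<dots> = (la - mu) \<bullet> v" unfolding c by (simp add: inner_sum_left)
      finally have "real (c \<alpha>) * (\<alpha> \<bullet> v) \<le> 2 * norm la * norm v" using bound by simp
      then have "real (c \<alpha>) \<le> 2 * norm la * norm v / (\<alpha> \<bullet> v)" using av by (simp add: field_simps)
      then have "real (c \<alpha>) \<le> real (B \<alpha>)" unfolding B_def by linarith
      then show ?thesis by simp
    qed
    have "restrict c Rp \<in> PiE Rp (\<lambda>\<alpha>. {0..B \<alpha>})" using cb by auto
    moreover have "mu = f (restrict c Rp)"
    proof -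
      have "(\<Sum>\<alpha>\<in>Rp. real (restrict c Rp \<alpha>) *\<^sub>R \<alpha>) = (\<Sum>\<alpha>\<in>Rp. real (c \<alpha>) *\<^sub>R \<alpha>)" by (intro sum.cong) auto
      then show ?thesis unfolding f_def using c by (simp add: algebra_simps)
    qed
    ultimately show "mu \<in> f ` (PiE Rp (\<lambda>\<alpha>. {0..B \<alpha>}))" by blast
  qed
  moreover have "finite (f ` (PiE Rp (\<lambda>\<alpha>. {0..B \<alpha>})))" using finRp by (intro finite_imageI finite_PiE) auto
  ultimately show ?thesis using finite_subset by blast
qed

end

definition up :: "'a::euclidean_space \<Rightarrow> 'a \<Rightarrow> 'a \<Rightarrow> bool" where
  "up \<alpha> y x \<longleftrightarrow> (\<exists>k::nat. x = y + real (Suc k) *\<^sub>R \<alpha>)"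

definition T :: "'a::euclidean_space set \<Rightarrow> 'a \<Rightarrow> 'a \<Rightarrow> real" where
  "T A \<alpha> y = (\<Sum>x\<in>{x\<in>A. up \<alpha> y x}. x \<bullet> \<alpha>)"

definition S :: "'a::euclidean_space set \<Rightarrow> 'a \<Rightarrow> 'a \<Rightarrow> real" where
  "S A \<alpha> y = (if y \<in> A then y \<bullet> \<alpha> else 0) + 2 * T A \<alpha> y"

lemma laplacian_indicator: "laplacian f y = (norm y)^2 * f y"
proof -
  have "laplacian f y = (\<Sum>j\<in>Basis. (y \<bullet> j) * (y \<bullet> j)) * f y"
    by (simp add: laplacian_def dderiv_def sum_distrib_right mult.assoc)
  also have "(\<Sum>j\<in>Basis. (y \<bullet> j) * (y \<bullet> j)) = y \<bullet> y" by (simp add: euclidean_inner[of y y])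
  finally show ?thesis by (simp add: power2_norm_eq_inner)
qed

lemma up_inj:
  fixes y \<alpha> :: "'a::euclidean_space"
  assumes "\<alpha> \<noteq> 0" shows "inj (\<lambda>k::nat. y + real (Suc k) *\<^sub>R \<alpha>)"
proof (rule injI)
  fix k l :: nat assume "y + real (Suc k) *\<^sub>R \<alpha> = y + real (Suc l) *\<^sub>R \<alpha>"
  then have "real (Suc k) *\<^sub>R \<alpha> = real (Suc l) *\<^sub>R \<alpha>" by simp
  then have "real (Suc k) = real (Suc l)" using assms by (simp add: scaleR_cancel_right)
  then show "k = l" by simp
qed

lemma suminf_string:
  assumes A: "finite A" and a: "\<alpha> \<noteq> 0"
  shows "(\<Sum>k. (\<lambda>x. (x \<bullet> \<alpha>) * indicator A x) (y + real (Suc k) *\<^sub>R \<alpha>)) = T A \<alpha> y"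
proof -
  define N where "N = {k::nat. y + real (Suc k) *\<^sub>R \<alpha> \<in> A}"
  have inj: "inj (\<lambda>k::nat. y + real (Suc k) *\<^sub>R \<alpha>)" using up_inj[OF a] .
  have finN: "finite N"
  proof -
    have "(\<lambda>k::nat. y + real (Suc k) *\<^sub>R \<alpha>) ` N \<subseteq> A" by (auto simp: N_def)
    then have "finite ((\<lambda>k::nat. y + real (Suc k) *\<^sub>R \<alpha>) ` N)" using A finite_subset by blast
    then show ?thesis using inj by (simp add: finite_image_iff inj_on_subset)
  qed
  have "(\<Sum>k. (\<lambda>x. (x \<bullet> \<alpha>) * indicator A x) (y + real (Suc k) *\<^sub>R \<alpha>)) =
        (\<Sum>k\<in>N. (\<lambda>x. (x \<bullet> \<alpha>) * indicator A x) (y + real (Suc k) *\<^sub>R \<alpha>))"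
    by (rule suminf_finite[OF finN]) (auto simp: N_def)
  also have "\<dots> = (\<Sum>k\<in>N. (\<lambda>x. x \<bullet> \<alpha>) (y + real (Suc k) *\<^sub>R \<alpha>))"
    by (intro sum.cong) (auto simp: N_def)
  also have "\<dots> = (\<Sum>x\<in>(\<lambda>k::nat. y + real (Suc k) *\<^sub>R \<alpha>) ` N. x \<bullet> \<alpha>)"
    using sum.reindex[OF inj_on_subset[OF inj subset_UNIV], of "\<lambda>x. x \<bullet> \<alpha>"] by (simp add: comp_def)
  also have "(\<lambda>k::nat. y + real (Suc k) *\<^sub>R \<alpha>) ` N = {x\<in>A. up \<alpha> y x}"
    by (auto simp: N_def up_def)
  finally show ?thesis by (simp add: T_def)
qed

lemma hyp_op_formula:
  assumes A: "finite A" and nz: "\<And>\<alpha>. \<alpha> \<in> pos_roots R v \<Longrightarrow> \<alpha> \<noteq> 0"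
  shows "hyp_op R v g (indicator A) y = (norm y)^2 * indicator A y + (\<Sum>\<alpha>\<in>pos_roots R v. g \<alpha> * S A \<alpha> y)"
proof -
  have "mult_coth \<alpha> (dderiv \<alpha> (indicator A)) y = S A \<alpha> y" if "\<alpha> \<in> pos_roots R v" for \<alpha>
  proof -
    have "mult_coth \<alpha> (dderiv \<alpha> (indicator A)) y =
      (y \<bullet> \<alpha>) * indicator A y + 2 * (\<Sum>k. (\<lambda>x. (x \<bullet> \<alpha>) * indicator A x) (y + real (Suc k) *\<^sub>R \<alpha>))"
      by (simp add: mult_coth_def dderiv_def)
    also have "\<dots> = S A \<alpha> y" using suminf_string[OF A nz[OF that]] by (simp add: S_def indicator_def)
    finally show ?thesis .
  qed
  then show ?thesis by (simp add: hyp_op_def laplacian_indicator)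
qed


context RS begin

lemma up_weyl: "w \<in> W \<Longrightarrow> up (w \<alpha>) (w y) (w z) \<longleftrightarrow> up \<alpha> y z"
proof -
  assume w: "w \<in> W"
  have "w z = w y + real (Suc k) *\<^sub>R w \<alpha> \<longleftrightarrow> z = y + real (Suc k) *\<^sub>R \<alpha>" for k
  proof -
    have "w y + real (Suc k) *\<^sub>R w \<alpha> = w (y + real (Suc k) *\<^sub>R \<alpha>)" using weyl_add[OF w] weyl_scale[OF w] by simp
    then show ?thesis using weyl_inj[OF w] by (metis injD)
  qed
  then show ?thesis by (simp add: up_def)
qed

lemma orbit_image: "w \<in> W \<Longrightarrow> w ` orbit R z = orbit R z"
proof
  assume w: "w \<in> W"
  show "w ` orbit R z \<subseteq> orbit R z" using orbit_closed[OF _ w] by blast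
  show "orbit R z \<subseteq> w ` orbit R z"
  proof
    fix x assume "x \<in> orbit R z"
    then have "inv w x \<in> orbit R z" using orbit_closed weyl_inv_mem w by blast
    then show "x \<in> w ` orbit R z" using weyl_inv_r[OF w] by (metis image_eqI)
  qed
qed

lemma T_weyl: "w \<in> W \<Longrightarrow> T (orbit R z) (w \<alpha>) (w y) = T (orbit R z) \<alpha> y"
proof -
  assume w: "w \<in> W"
  let ?O = "orbit R z"
  have eq: "{x\<in>?O. up (w \<alpha>) (w y) x} = w ` {x\<in>?O. up \<alpha> y x}"
  proof
    show "{x\<in>?O. up (w \<alpha>) (w y) x} \<subseteq> w ` {x\<in>?O. up \<alpha> y x}"
    proof
      fix x assume x: "x \<in> {x\<in>?O. up (w \<alpha>) (w y) x}"
      have "x = w (inv w x)" using weyl_inv_r[OF w] by simp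
      moreover have "inv w x \<in> ?O" using x orbit_closed weyl_inv_mem w by blast
      moreover have "up \<alpha> y (inv w x)" using x up_weyl[OF w, of \<alpha> y "inv w x"] weyl_inv_r[OF w] by simp
      ultimately show "x \<in> w ` {x\<in>?O. up \<alpha> y x}" by blast
    qed
    show "w ` {x\<in>?O. up \<alpha> y x} \<subseteq> {x\<in>?O. up (w \<alpha>) (w y) x}"
      using up_weyl[OF w] orbit_closed[OF _ w] by blast
  qed
  have inj: "inj_on w {x\<in>?O. up \<alpha> y x}" using weyl_inj[OF w] inj_on_subset by blast
  have "T ?O (w \<alpha>) (w y) = (\<Sum>x\<in>w ` {x\<in>?O. up \<alpha> y x}. x \<bullet> w \<alpha>)" unfolding T_def eq ..
  also have "\<dots> = (\<Sum>x\<in>{x\<in>?O. up \<alpha> y x}. w x \<bullet> w \<alpha>)"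
    using sum.reindex[OF inj, of "\<lambda>x. x \<bullet> w \<alpha>"] by (simp add: comp_def)
  also have "\<dots> = T ?O \<alpha> y" unfolding T_def using weyl_inner[OF w] by simp
  finally show ?thesis .
qed

lemma S_weyl: "w \<in> W \<Longrightarrow> S (orbit R z) (w \<alpha>) (w y) = S (orbit R z) \<alpha> y"
  unfolding S_def using T_weyl orbit_closed_iff weyl_inner by simp

lemma S_neg:
  assumes a: "\<alpha> \<in> R" and z: "z \<in> weights R"
  shows "S (orbit R z) (- \<alpha>) y = S (orbit R z) \<alpha> y"
proof -
  let ?O = "orbit R z"
  have a0: "\<alpha> \<noteq> 0" using zeroR a by auto
  define L where "L = {x\<in>?O. \<exists>k::int. x = y + of_int k *\<^sub>R \<alpha>}"
  have finL: "finite L" using finite_orbit by (simp add: L_def)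
  have maps: "refl \<alpha> x \<in> L" if x: "x \<in> L" for x
  proof -
    obtain k :: int where k: "x = y + of_int k *\<^sub>R \<alpha>" "x \<in> ?O" using x by (auto simp: L_def)
    have "x \<in> weights R" using orbit_weights[OF z k(2)] .
    then obtain c where c: "x \<bullet> coroot \<alpha> = of_int c" using weight_coroot_int[OF _ a] Ints_cases by metis
    have "refl \<alpha> x = y + of_int (k - c) *\<^sub>R \<alpha>" using k(1) c by (simp add: refl_def algebra_simps)
    moreover have "refl \<alpha> x \<in> ?O" using orbit_closed[OF k(2) weyl_refl[OF a]] .
    ultimately show ?thesis unfolding L_def by (intro CollectI conjI exI[of _ "k - c"]) auto
  qed
  have bij: "bij_betw (refl \<alpha>) L L"
    by (rule bij_betw_byWitness[where f'="refl \<alpha>"]) (use maps refl_refl[OF a0] in auto)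
  have "(\<Sum>x\<in>L. refl \<alpha> x \<bullet> \<alpha>) = (\<Sum>x\<in>L. x \<bullet> \<alpha>)" using sum.reindex_bij_betw[OF bij] .
  moreover have "(\<Sum>x\<in>L. refl \<alpha> x \<bullet> \<alpha>) = - (\<Sum>x\<in>L. x \<bullet> \<alpha>)"
    using refl_inner_root[OF a0] by (simp add: sum_negf)
  ultimately have L0: "(\<Sum>x\<in>L. x \<bullet> \<alpha>) = 0" by simp
  define L0 where "L0 = {x\<in>?O. x = y}"
  define L1 where "L1 = {x\<in>?O. up \<alpha> y x}"
  define L2 where "L2 = {x\<in>?O. up (- \<alpha>) y x}"
  have Lsplit: "L = L0 \<union> L1 \<union> L2"
  proof
    show "L \<subseteq> L0 \<union> L1 \<union> L2"
    proof
      fix x assume "x \<in> L"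
      then obtain k :: int where k: "x = y + of_int k *\<^sub>R \<alpha>" "x \<in> ?O" by (auto simp: L_def)
      consider "k = 0" | "k > 0" | "k < 0" by linarith
      then show "x \<in> L0 \<union> L1 \<union> L2"
      proof cases
        case 1 then show ?thesis using k by (simp add: L0_def)
      next
        case 2
        then have "x = y + real (Suc (nat (k - 1))) *\<^sub>R \<alpha>" using k(1) by simp
        then show ?thesis using k(2) by (auto simp: L1_def up_def)
      next
        case 3
        then have "x = y + real (Suc (nat (- k - 1))) *\<^sub>R (- \<alpha>)" using k(1) by (simp add: of_nat_diff)
        then show ?thesis using k(2) by (auto simp: L2_def up_def)
      qed
    qed
    show "L0 \<union> L1 \<union> L2 \<subseteq> L"
    proof
      fix x assume "x \<in> L0 \<union> L1 \<union> L2"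
      then consider "x \<in> L0" | "x \<in> L1" | "x \<in> L2" by blast
      then show "x \<in> L"
      proof cases
        case 1 then show ?thesis by (auto simp: L0_def L_def intro: exI[of _ 0])
      next
        case 2
        then obtain k :: nat where "x = y + real (Suc k) *\<^sub>R \<alpha>" "x \<in> ?O" by (auto simp: L1_def up_def)
        then show ?thesis unfolding L_def by (auto intro!: exI[of _ "int (Suc k)"])
      next
        case 3
        then obtain k :: nat where "x = y + real (Suc k) *\<^sub>R (- \<alpha>)" "x \<in> ?O" by (auto simp: L2_def up_def)
        then show ?thesis unfolding L_def by (auto intro!: exI[of _ "- int (Suc k)"] simp: algebra_simps)
      qed
    qed
  qed
  have d01: "L0 \<inter> L1 = {}" using a0 by (auto simp: L0_def L1_def up_def)
  have d012: "(L0 \<union> L1) \<inter> L2 = {}"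
  proof -
    have "x \<notin> L2" if "x \<in> L0 \<union> L1" for x
    proof
      assume x2: "x \<in> L2"
      obtain l :: nat where l: "x = y + real (Suc l) *\<^sub>R (- \<alpha>)" using x2 by (auto simp: L2_def up_def)
      from that show False
      proof
        assume "x \<in> L0" then have "x = y" by (simp add: L0_def)
        then show False using l a0 by simp
      next
        assume "x \<in> L1"
        then obtain k :: nat where k: "x = y + real (Suc k) *\<^sub>R \<alpha>" by (auto simp: L1_def up_def)
        have e1: "x - y = real (Suc k) *\<^sub>R \<alpha>" using k by simp
        have e2: "x - y = - (real (Suc l) *\<^sub>R \<alpha>)" using l by simp
        have "real (Suc l) *\<^sub>R \<alpha> + real (Suc k) *\<^sub>R \<alpha> = 0" using e1 e2 by (metis neg_eq_iff_add_eq_0)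
        then have "(real (Suc k) + real (Suc l)) *\<^sub>R \<alpha> = 0" by (metis scaleR_add_left add.commute)
        then show False using a0 by (simp add: add_pos_pos)
      qed
    qed
    then show ?thesis by blast
  qed
  have fin012: "finite L0" "finite L1" "finite L2" using finite_orbit by (auto simp: L0_def L1_def L2_def)
  have "(\<Sum>x\<in>L. x \<bullet> \<alpha>) = (\<Sum>x\<in>L0. x \<bullet> \<alpha>) + (\<Sum>x\<in>L1. x \<bullet> \<alpha>) + (\<Sum>x\<in>L2. x \<bullet> \<alpha>)"
    unfolding Lsplit using fin012 d01 d012 by (simp add: sum.union_disjoint)
  moreover have "(\<Sum>x\<in>L0. x \<bullet> \<alpha>) = (if y \<in> ?O then y \<bullet> \<alpha> else 0)"
  proof (cases "y \<in> ?O")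
    case True then have "L0 = {y}" by (auto simp: L0_def)
    then show ?thesis using True by simp
  next
    case False then have "L0 = {}" by (auto simp: L0_def)
    then show ?thesis using False by simp
  qed
  moreover have "(\<Sum>x\<in>L1. x \<bullet> \<alpha>) = T ?O \<alpha> y" by (simp add: T_def L1_def)
  moreover have "(\<Sum>x\<in>L2. x \<bullet> \<alpha>) = - T ?O (- \<alpha>) y" by (simp add: T_def L2_def sum_negf)
  ultimately have "(if y \<in> ?O then y \<bullet> \<alpha> else 0) + T ?O \<alpha> y - T ?O (- \<alpha>) y = 0" using L0 by simp
  then show ?thesis unfolding S_def by auto
qed

end

locale MT = RS +
  fixes g :: "'a \<Rightarrow> real" and la :: 'a
  assumes ginv: "\<And>w \<alpha>. w \<in> weyl R \<Longrightarrow> \<alpha> \<in> R \<Longrightarrow> g (w \<alpha>) = g \<alpha>"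
    and la_dom: "la \<in> dominant R v"
begin

abbreviation "Ob \<equiv> orbit R la"

definition LHS :: "'a \<Rightarrow> real" where
  "LHS y = (norm y)^2 * indicator Ob y + (\<Sum>\<alpha>\<in>Rp. g \<alpha> * S Ob \<alpha> y)"

lemma la_w: "la \<in> weights R" using la_dom dominant_iff by blast

lemma hyp_LHS: "hyp_op R v g (orbit_sum R la) y = LHS y"
  unfolding orbit_sum_def LHS_def
  by (rule hyp_op_formula[OF finite_orbit]) (use zeroR Rp_sub in blast)

lemma g_neg: "\<alpha> \<in> R \<Longrightarrow> g (- \<alpha>) = g \<alpha>"
  using ginv[OF weyl_refl, of \<alpha> \<alpha>] refl_self zeroR by metis

lemma R_split: "R = Rp \<union> uminus ` Rp" and R_disj: "Rp \<inter> uminus ` Rp = {}"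
proof -
  show "R = Rp \<union> uminus ` Rp"
  proof
    show "R \<subseteq> Rp \<union> uminus ` Rp"
    proof
      fix \<alpha> assume "\<alpha> \<in> R"
      then have "\<alpha> \<in> Rp \<or> - \<alpha> \<in> Rp" using pos_or_neg by blast
      then show "\<alpha> \<in> Rp \<union> uminus ` Rp" by (metis UnI1 UnI2 image_eqI minus_minus)
    qed
    show "Rp \<union> uminus ` Rp \<subseteq> R" using Rp_sub neg_mem by auto
  qed
  show "Rp \<inter> uminus ` Rp = {}" using not_both by auto
qed

lemma sum_half:
  fixes f :: "'a \<Rightarrow> real"
  assumes "\<And>\<alpha>. \<alpha> \<in> R \<Longrightarrow> f (- \<alpha>) = f \<alpha>"
  shows "(\<Sum>\<alpha>\<in>Rp. f \<alpha>) = (1/2) * (\<Sum>\<alpha>\<in>R. f \<alpha>)"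
proof -
  have "(\<Sum>\<alpha>\<in>R. f \<alpha>) = (\<Sum>\<alpha>\<in>Rp. f \<alpha>) + (\<Sum>\<alpha>\<in>uminus ` Rp. f \<alpha>)"
    by (subst R_split) (rule sum.union_disjoint, use finRp R_disj in auto)
  also have "(\<Sum>\<alpha>\<in>uminus ` Rp. f \<alpha>) = (\<Sum>\<alpha>\<in>Rp. f (- \<alpha>))"
    by (subst sum.reindex) (auto simp: inj_on_def)
  also have "\<dots> = (\<Sum>\<alpha>\<in>Rp. f \<alpha>)" using assms Rp_sub by (intro sum.cong) auto
  finally show ?thesis by simp
qed

lemma LHS_half: "LHS y = (norm y)^2 * indicator Ob y + (1/2) * (\<Sum>\<alpha>\<in>R. g \<alpha> * S Ob \<alpha> y)"
  unfolding LHS_def using S_neg[OF _ la_w] g_neg by (subst sum_half) auto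

lemma sum_R_weyl: "w \<in> W \<Longrightarrow> (\<Sum>\<alpha>\<in>R. f (w \<alpha>)) = (\<Sum>\<alpha>\<in>R. f \<alpha>)"
  using sum.reindex_bij_betw[OF weyl_bij] by blast

lemma LHS_weyl: "w \<in> W \<Longrightarrow> LHS (w y) = LHS y"
proof -
  assume w: "w \<in> W"
  have "(\<Sum>\<alpha>\<in>R. g \<alpha> * S Ob \<alpha> (w y)) = (\<Sum>\<alpha>\<in>R. g (w \<alpha>) * S Ob (w \<alpha>) (w y))"
    using sum_R_weyl[OF w, of "\<lambda>\<alpha>. g \<alpha> * S Ob \<alpha> (w y)"] by simp
  also have "\<dots> = (\<Sum>\<alpha>\<in>R. g \<alpha> * S Ob \<alpha> y)" using ginv[OF w] S_weyl[OF w] by simp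
  finally show ?thesis unfolding LHS_half using weyl_norm[OF w] orbit_closed_iff[OF w]
    by (simp add: indicator_def)
qed

lemma LHS_notO: "y \<notin> Ob \<Longrightarrow> LHS y = (\<Sum>\<alpha>\<in>R. g \<alpha> * T Ob \<alpha> y)"
  unfolding LHS_half by (simp add: S_def sum_distrib_left mult_ac)

lemma LHS_notO_pos: "y \<notin> Ob \<Longrightarrow> LHS y = (\<Sum>\<alpha>\<in>Rp. g \<alpha> * (2 * T Ob \<alpha> y))"
  unfolding LHS_def by (simp add: S_def)

lemma up_below: "x \<in> Ob \<Longrightarrow> up \<alpha> y x \<Longrightarrow> \<alpha> \<in> Rp \<Longrightarrow> la - y \<in> pos_cone R v \<and> y \<noteq> la"
proof -
  assume x: "x \<in> Ob" and u: "up \<alpha> y x" and a: "\<alpha> \<in> Rp"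
  obtain k :: nat where k: "x = y + real (Suc k) *\<^sub>R \<alpha>" using u by (auto simp: up_def)
  have "la - x \<in> pos_cone R v" using climb[OF la_dom x] .
  moreover have "la - y = (la - x) + real (Suc k) *\<^sub>R \<alpha>" using k by (simp add: algebra_simps)
  ultimately have "la - y \<in> pos_cone R v" using pos_cone_add[OF _ pos_cone_root[OF a, of "Suc k"]] by metis
  moreover have "y \<noteq> la"
  proof
    assume "y = la"
    then have "- (real (Suc k) *\<^sub>R \<alpha>) \<in> pos_cone R v" using \<open>la - x \<in> pos_cone R v\<close> k by simp
    then show False using pos_cone_neg_root[OF a, of "Suc k"] by simp
  qed
  ultimately show ?thesis by blast
qed

lemma LHS_la: "LHS la = eigval R v g la"
proof -
  have T0: "T Ob \<alpha> la = 0" if "\<alpha> \<in> Rp" for \<alpha>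
    using up_below[OF _ _ that] unfolding T_def by (intro sum.neutral) auto
  have "LHS la = (norm la)^2 + (\<Sum>\<alpha>\<in>Rp. g \<alpha> * (la \<bullet> \<alpha>))"
    unfolding LHS_def using T0 orbit_self by (simp add: S_def)
  moreover have "eigval R v g la = la \<bullet> la + 2 * (la \<bullet> rho R v g)"
    by (simp add: eigval_def inner_add_left inner_add_right inner_commute)
  moreover have "2 * (la \<bullet> rho R v g) = (\<Sum>\<alpha>\<in>Rp. g \<alpha> * (la \<bullet> \<alpha>))"
    by (simp add: rho_def inner_sum_right)
  ultimately show ?thesis by (simp add: power2_norm_eq_inner)
qed

end

context RS begin

lemma stab_card_eq:
  assumes y: "y \<in> orbit R z"
  shows "card {w\<in>W. w z = y} = card (stabilizer R z)"
proof -
  obtain w0 where w0: "w0 \<in> W" "y = w0 z" using y by (auto simp: orbit_iff)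
  have "bij_betw (\<lambda>s. w0 \<circ> s) (stabilizer R z) {w\<in>W. w z = y}"
  proof (rule bij_betw_byWitness[where f'="\<lambda>w. inv w0 \<circ> w"])
    show "\<forall>s\<in>stabilizer R z. inv w0 \<circ> (w0 \<circ> s) = s"
    proof
      fix s show "inv w0 \<circ> (w0 \<circ> s) = s" by (rule ext) (simp add: weyl_inv_l[OF w0(1)])
    qed
    show "\<forall>w\<in>{w\<in>W. w z = y}. w0 \<circ> (inv w0 \<circ> w) = w"
    proof
      fix w show "w0 \<circ> (inv w0 \<circ> w) = w" by (rule ext) (simp add: weyl_inv_r[OF w0(1)])
    qed
    show "(\<lambda>s. w0 \<circ> s) ` stabilizer R z \<subseteq> {w\<in>W. w z = y}"
      using w0 weyl_comp by (auto simp: stabilizer_def)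
    show "(\<lambda>w. inv w0 \<circ> w) ` {w\<in>W. w z = y} \<subseteq> stabilizer R z"
      using w0 weyl_comp weyl_inv_mem weyl_inv_l by (auto simp: stabilizer_def)
  qed
  then show ?thesis by (simp add: bij_betw_same_card)
qed

lemma orbit_stab: "card (orbit R z) * card (stabilizer R z) = card W"
proof -
  have "card W = (\<Sum>y\<in>(\<lambda>w. w z) ` W. card {w\<in>W. w z = y})"
    using sum.image_gen[OF finite_weyl, of "\<lambda>_. 1::nat" "\<lambda>w. w z"] by simp
  also have "\<dots> = (\<Sum>y\<in>orbit R z. card (stabilizer R z))"
    unfolding orbit_def[symmetric] using stab_card_eq by (intro sum.cong) auto
  finally show ?thesis by simp
qed

lemma stab_pos: "card (stabilizer R z) > 0"
proof -
  have "id \<in> stabilizer R z" using weyl.weyl_id by (simp add: stabilizer_def)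
  moreover have "finite (stabilizer R z)" using finite_weyl by (simp add: stabilizer_def)
  ultimately show ?thesis by (auto simp: card_gt_0_iff)
qed

lemma orbit_card_pos: "card (orbit R z) > 0"
  using finite_orbit orbit_self by (auto simp: card_gt_0_iff)

lemma up_set_weyl:
  assumes u: "u \<in> W"
  shows "{y\<in>orbit R z. up (u \<beta>) y (u x)} = u ` {y\<in>orbit R z. up \<beta> y x}"
proof
  show "{y\<in>orbit R z. up (u \<beta>) y (u x)} \<subseteq> u ` {y\<in>orbit R z. up \<beta> y x}"
  proof
    fix y assume y: "y \<in> {y\<in>orbit R z. up (u \<beta>) y (u x)}"
    have "y = u (inv u y)" using weyl_inv_r[OF u] by simp
    moreover have "inv u y \<in> orbit R z" using y orbit_closed weyl_inv_mem u by blast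
    moreover have "up \<beta> (inv u y) x" using y up_weyl[OF u, of \<beta> "inv u y" x] weyl_inv_r[OF u] by simp
    ultimately show "y \<in> u ` {y\<in>orbit R z. up \<beta> y x}" by blast
  qed
  show "u ` {y\<in>orbit R z. up \<beta> y x} \<subseteq> {y\<in>orbit R z. up (u \<beta>) y (u x)}"
    using up_weyl[OF u] orbit_closed[OF _ u] by blast
qed

lemma up_card_weyl:
  "u \<in> W \<Longrightarrow> card {y\<in>orbit R z. up (u \<beta>) y (u x)} = card {y\<in>orbit R z. up \<beta> y x}"
proof -
  assume u: "u \<in> W"
  have "inj_on u {y\<in>orbit R z. up \<beta> y x}" using weyl_inj[OF u] inj_on_subset by blast
  then show ?thesis unfolding up_set_weyl[OF u] by (rule card_image)
qed

end

context MT begin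

definition Fc :: "'a \<Rightarrow> 'a \<Rightarrow> real" where
  "Fc nu x = (\<Sum>\<alpha>\<in>R. g \<alpha> * (x \<bullet> \<alpha>) * real (card {y\<in>orbit R nu. up \<alpha> y x}))"

lemma notO_orbit: "nu \<notin> Ob \<Longrightarrow> y \<in> orbit R nu \<Longrightarrow> y \<notin> Ob"
  using orbit_sym orbit_trans by blast

lemma sum_if_card: "finite B \<Longrightarrow> (\<Sum>y\<in>B. if P y then c else 0) = c * real (card {y\<in>B. P y})"
  by (simp add: sum.inter_filter[symmetric])

lemma sum_LHS_orbit:
  assumes nu: "nu \<notin> Ob"
  shows "(\<Sum>y\<in>orbit R nu. LHS y) = (\<Sum>x\<in>Ob. Fc nu x)"
proof -
  let ?B = "orbit R nu"
  have fB: "finite ?B" and fO: "finite Ob" using finite_orbit by auto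
  have "(\<Sum>y\<in>?B. LHS y) = (\<Sum>y\<in>?B. \<Sum>\<alpha>\<in>R. \<Sum>x\<in>Ob. g \<alpha> * (if up \<alpha> y x then x \<bullet> \<alpha> else 0))"
    using notO_orbit[OF nu] fO
    by (intro sum.cong refl) (simp add: LHS_notO T_def sum.inter_filter sum_distrib_left)
  also have "\<dots> = (\<Sum>\<alpha>\<in>R. \<Sum>y\<in>?B. \<Sum>x\<in>Ob. g \<alpha> * (if up \<alpha> y x then x \<bullet> \<alpha> else 0))"
    by (rule sum.swap)
  also have "\<dots> = (\<Sum>\<alpha>\<in>R. \<Sum>x\<in>Ob. \<Sum>y\<in>?B. g \<alpha> * (if up \<alpha> y x then x \<bullet> \<alpha> else 0))"
    by (intro sum.cong refl sum.swap)
  also have "\<dots> = (\<Sum>x\<in>Ob. \<Sum>\<alpha>\<in>R. \<Sum>y\<in>?B. g \<alpha> * (if up \<alpha> y x then x \<bullet> \<alpha> else 0))"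
    by (rule sum.swap)
  also have "\<dots> = (\<Sum>x\<in>Ob. Fc nu x)"
  proof (intro sum.cong refl)
    fix x
    have inner: "(\<Sum>y\<in>?B. g \<alpha> * (if up \<alpha> y x then x \<bullet> \<alpha> else 0)) = g \<alpha> * (x \<bullet> \<alpha>) * real (card {y\<in>?B. up \<alpha> y x})" for \<alpha>
    proof -
      have "(\<Sum>y\<in>?B. g \<alpha> * (if up \<alpha> y x then x \<bullet> \<alpha> else 0)) = g \<alpha> * (\<Sum>y\<in>?B. if up \<alpha> y x then x \<bullet> \<alpha> else 0)"
        by (simp add: sum_distrib_left)
      also have "\<dots> = g \<alpha> * ((x \<bullet> \<alpha>) * real (card {y\<in>?B. up \<alpha> y x}))"
        using sum_if_card[OF fB, of "\<lambda>y. up \<alpha> y x" "x \<bullet> \<alpha>"] by simp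
      finally show ?thesis by (simp add: mult.assoc)
    qed
    show "(\<Sum>\<alpha>\<in>R. \<Sum>y\<in>?B. g \<alpha> * (if up \<alpha> y x then x \<bullet> \<alpha> else 0)) = Fc nu x"
      unfolding Fc_def using inner by simp
  qed
  finally show ?thesis .
qed

lemma Fc_weyl: "u \<in> W \<Longrightarrow> Fc nu (u x) = Fc nu x"
proof -
  assume u: "u \<in> W"
  have "Fc nu (u x) = (\<Sum>\<alpha>\<in>R. g (u \<alpha>) * (u x \<bullet> u \<alpha>) * real (card {y\<in>orbit R nu. up (u \<alpha>) y (u x)}))"
    unfolding Fc_def using sum_R_weyl[OF u, of "\<lambda>\<alpha>. g \<alpha> * (u x \<bullet> \<alpha>) * real (card {y\<in>orbit R nu. up \<alpha> y (u x)})"]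
    by simp
  also have "\<dots> = Fc nu x" unfolding Fc_def
    using ginv[OF u] weyl_inner[OF u] up_card_weyl[OF u] by simp
  finally show ?thesis .
qed

lemma sum_Fc: "(\<Sum>x\<in>Ob. Fc nu x) = real (card Ob) * Fc nu la"
proof -
  have "(\<Sum>x\<in>Ob. Fc nu x) = (\<Sum>x\<in>Ob. Fc nu la)"
    by (intro sum.cong refl) (auto simp: orbit_iff Fc_weyl)
  then show ?thesis by simp
qed

lemma LHS_count:
  assumes nu: "nu \<notin> Ob"
  shows "LHS nu = real (card (stabilizer R nu)) / real (card (stabilizer R la)) * Fc nu la"
proof -
  let ?B = "orbit R nu"
  have "(\<Sum>y\<in>?B. LHS y) = (\<Sum>y\<in>?B. LHS nu)"
    by (intro sum.cong refl) (auto simp: orbit_iff LHS_weyl)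
  then have "real (card ?B) * LHS nu = real (card Ob) * Fc nu la"
    using sum_LHS_orbit[OF nu] sum_Fc by simp
  moreover have "real (card ?B) * real (card (stabilizer R nu)) = real (card Ob) * real (card (stabilizer R la))"
    using orbit_stab[of nu] orbit_stab[of la] by (metis of_nat_mult)
  moreover have "card ?B > 0" "card (stabilizer R la) > 0" "card (stabilizer R nu) > 0"
    using orbit_card_pos stab_pos by auto
  ultimately show ?thesis
  proof -
    fix a b c d L F :: real
    have key: "\<And>a b c d L F :: real. a * L = c * F \<Longrightarrow> a * b = c * d \<Longrightarrow> a > 0 \<Longrightarrow> d > 0 \<Longrightarrow> L = b / d * F"
    proof -
      fix a b c d L F :: real
      assume h: "a * L = c * F" "a * b = c * d" "a > 0" "d > 0"
      have "L = c * F / a" using h(1,3) by (simp add: field_simps)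
      moreover have "b / d = c / a" using h(2,3,4) by (simp add: field_simps)
      ultimately show "L = b / d * F" by simp
    qed
    assume "real (card ?B) * LHS nu = real (card Ob) * Fc nu la"
      "real (card ?B) * real (card (stabilizer R nu)) = real (card Ob) * real (card (stabilizer R la))"
      "card ?B > 0" "card (stabilizer R la) > 0" "card (stabilizer R nu) > 0"
    then show ?thesis using key by simp
  qed
qed

end

lemma normsq_string:
  fixes la \<beta> :: "'a::euclidean_space"
  assumes b: "\<beta> \<noteq> 0"
  shows "(norm (la - t *\<^sub>R \<beta>))^2 = (norm la)^2 - t * (la \<bullet> coroot \<beta> - t) * (\<beta> \<bullet> \<beta>)"
proof -
  have bb: "\<beta> \<bullet> \<beta> \<noteq> 0" using b by simp
  have "(norm (la - t *\<^sub>R \<beta>))^2 = la \<bullet> la - 2 * t * (la \<bullet> \<beta>) + t * t * (\<beta> \<bullet> \<beta>)"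
    by (simp add: power2_norm_eq_inner inner_diff_left inner_diff_right inner_commute algebra_simps)
  also have "la \<bullet> \<beta> = (la \<bullet> coroot \<beta>) * (\<beta> \<bullet> \<beta>) / 2" using bb by (simp add: coroot_inner)
  finally show ?thesis by (simp add: power2_norm_eq_inner algebra_simps)
qed

lemma floor_half_iff: "real l \<le> of_int \<lfloor>real mn / 2\<rfloor> \<longleftrightarrow> 2 * l \<le> mn"
proof -
  have "real l \<le> of_int \<lfloor>real mn / 2\<rfloor> \<longleftrightarrow> int l \<le> \<lfloor>real mn / 2\<rfloor>"
    by (metis of_int_le_iff of_int_of_nat_eq)
  also have "\<dots> \<longleftrightarrow> real l \<le> real mn / 2" by (simp add: le_floor_iff)
  also have "\<dots> \<longleftrightarrow> 2 * l \<le> mn" by linarith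
  finally show ?thesis .
qed

context MT begin

lemma below_orbit:
  assumes nu: "nu \<in> dominant R v" "la - nu \<in> pos_cone R v" and y: "y \<in> orbit R nu"
  shows "la - y \<in> pos_cone R v"
proof -
  have "nu - y \<in> pos_cone R v" using climb[OF nu(1) y] .
  then show ?thesis using pos_cone_add[OF nu(2)] by (metis diff_add_cancel add_diff_eq)
qed

lemma M_neg:
  assumes nu: "nu \<in> dominant R v" "la - nu \<in> pos_cone R v" and b: "\<beta> \<in> R" "\<beta> \<notin> Rp"
  shows "{y\<in>orbit R nu. up \<beta> y la} = {}"
proof -
  have nb: "- \<beta> \<in> Rp" using pos_or_neg b by blast
  have False if y: "y \<in> orbit R nu" "up \<beta> y la" for y
  proof -
    obtain k :: nat where k: "la = y + real (Suc k) *\<^sub>R \<beta>" using y(2) by (auto simp: up_def)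
    have "la - y \<in> pos_cone R v" using below_orbit[OF nu y(1)] .
    moreover have "la - y = - (real (Suc k) *\<^sub>R (- \<beta>))" using k by simp
    ultimately show False using pos_cone_neg_root[OF nb, of "Suc k"] by simp
  qed
  then show ?thesis by blast
qed

lemma M_pos:
  assumes nu: "nu \<in> dominant R v" "la - nu \<in> pos_cone R v" "nu \<notin> Ob" and b: "\<beta> \<in> Rp"
  shows "real (card {y\<in>orbit R nu. up \<beta> y la}) =
         (if \<beta> \<in> root_interval R v la nu then nmult la nu \<beta> else 0)"
proof -
  let ?B = "orbit R nu"
  have bR: "\<beta> \<in> R" using b Rp_sub by auto
  have b0: "\<beta> \<noteq> 0" using zeroR bR by auto
  have bb: "\<beta> \<bullet> \<beta> > 0" using b0 by simp
  define m where "m = la \<bullet> coroot \<beta>"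
  have mZ: "m \<in> \<int>" using weight_coroot_int[OF la_w bR] by (simp add: m_def)
  have m0: "m \<ge> 0" using la_dom b by (simp add: dominant_def m_def)
  obtain mn :: nat where mn: "m = real mn"
  proof -
    obtain z where "m = of_int z" using mZ Ints_cases by blast
    then show ?thesis using that[of "nat z"] m0 by simp
  qed
  define K where "K = {k::nat. 1 \<le> k \<and> la - real k *\<^sub>R \<beta> \<in> ?B}"
  have refl_str: "refl \<beta> (la - t *\<^sub>R \<beta>) = la - (m - t) *\<^sub>R \<beta>" for t
  proof -
    have "(la - t *\<^sub>R \<beta>) \<bullet> coroot \<beta> = m - 2 * t"
      using bb by (simp add: m_def inner_diff_left coroot_inner field_simps)
    then have "refl \<beta> (la - t *\<^sub>R \<beta>) = (la - t *\<^sub>R \<beta>) - (m - 2 * t) *\<^sub>R \<beta>"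
      by (simp only: refl_def)
    also have "\<dots> = la - (m - t) *\<^sub>R \<beta>" by (simp add: scaleR_diff_left scaleR_add_left mult_2 algebra_simps flip: scaleR_add_left)
    finally show ?thesis .
  qed
  have inj: "inj_on (\<lambda>k::nat. la - real k *\<^sub>R \<beta>) K"
    using b0 by (auto simp: inj_on_def)
  have seteq: "{y\<in>?B. up \<beta> y la} = (\<lambda>k::nat. la - real k *\<^sub>R \<beta>) ` K"
  proof
    show "{y\<in>?B. up \<beta> y la} \<subseteq> (\<lambda>k::nat. la - real k *\<^sub>R \<beta>) ` K"
    proof
      fix y assume y: "y \<in> {y\<in>?B. up \<beta> y la}"
      then obtain k :: nat where k: "la = y + real (Suc k) *\<^sub>R \<beta>" by (auto simp: up_def)
      then have "y = la - real (Suc k) *\<^sub>R \<beta>" by simp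
      then show "y \<in> (\<lambda>k::nat. la - real k *\<^sub>R \<beta>) ` K" using y unfolding K_def by (intro image_eqI[of _ _ "Suc k"]) auto
    qed
    show "(\<lambda>k::nat. la - real k *\<^sub>R \<beta>) ` K \<subseteq> {y\<in>?B. up \<beta> y la}"
    proof
      fix y assume "y \<in> (\<lambda>k::nat. la - real k *\<^sub>R \<beta>) ` K"
      then obtain k where k: "k \<in> K" "y = la - real k *\<^sub>R \<beta>" by blast
      then obtain j where j: "k = Suc j" by (cases k) (auto simp: K_def)
      have "la = y + real (Suc j) *\<^sub>R \<beta>" using k(2) j by simp
      moreover have "y \<in> ?B" using k by (simp add: K_def)
      ultimately show "y \<in> {y\<in>?B. up \<beta> y la}" unfolding up_def by blast
    qed
  qed
  have cardK: "card {y\<in>?B. up \<beta> y la} = card K" unfolding seteq using card_image[OF inj] .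
  have K1: "k < mn" if k: "k \<in> K" for k
  proof (rule ccontr)
    assume "\<not> k < mn"
    then consider "k = mn" | "k > mn" by linarith
    then show False
    proof cases
      case 1
      have "la - real k *\<^sub>R \<beta> = refl \<beta> la" using 1 mn by (simp add: refl_def m_def)
      then have "la - real k *\<^sub>R \<beta> \<in> Ob" using orbit_closed[OF orbit_self weyl_refl[OF bR]] by simp
      moreover have "la - real k *\<^sub>R \<beta> \<in> ?B" using k by (simp add: K_def)
      ultimately show False using notO_orbit nu(3) by blast
    next
      case 2
      have "refl \<beta> (la - real k *\<^sub>R \<beta>) = la - (- real (k - mn)) *\<^sub>R \<beta>"
        using refl_str[of "real k"] mn 2 by (simp add: of_nat_diff)
      moreover have "refl \<beta> (la - real k *\<^sub>R \<beta>) \<in> ?B"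
        using k orbit_closed weyl_refl[OF bR] by (simp add: K_def)
      ultimately have "la - (la - (- real (k - mn)) *\<^sub>R \<beta>) \<in> pos_cone R v"
        using below_orbit[OF nu(1,2)] by metis
      then have "- (real (k - mn) *\<^sub>R \<beta>) \<in> pos_cone R v" by simp
      then show False using pos_cone_neg_root[OF b, of "k - mn"] 2 by simp
    qed
  qed
  have K2: "mn - k \<in> K" if k: "k \<in> K" for k
  proof -
    have "k < mn" using K1[OF k] .
    have "refl \<beta> (la - real k *\<^sub>R \<beta>) = la - real (mn - k) *\<^sub>R \<beta>"
      using refl_str[of "real k"] mn \<open>k < mn\<close> by (simp add: of_nat_diff)
    moreover have "refl \<beta> (la - real k *\<^sub>R \<beta>) \<in> ?B"
      using k orbit_closed weyl_refl[OF bR] by (simp add: K_def)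
    ultimately show ?thesis using \<open>k < mn\<close> by (simp add: K_def)
  qed
  have K3: "(norm nu)^2 = (norm la)^2 - real k * (real mn - real k) * (\<beta> \<bullet> \<beta>)" if k: "k \<in> K" for k
  proof -
    have "norm (la - real k *\<^sub>R \<beta>) = norm nu" using k orbit_norm by (simp add: K_def)
    then show ?thesis using normsq_string[OF b0, of la "real k"] mn by (simp add: m_def)
  qed
  have K4: "k' = k \<or> k' = mn - k" if k: "k \<in> K" and k': "k' \<in> K" for k k'
  proof -
    have "real k * (real mn - real k) * (\<beta> \<bullet> \<beta>) = real k' * (real mn - real k') * (\<beta> \<bullet> \<beta>)"
      using K3[OF k] K3[OF k'] by linarith
    then have "real k * (real mn - real k) = real k' * (real mn - real k')" using bb by simp
    then have "(real k' - real k) * (real mn - real k - real k') = 0" by (simp add: algebra_simps)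
    then have "real k' = real k \<or> real k' = real mn - real k" by auto
    then show ?thesis using K1[OF k] by (auto simp: of_nat_diff)
  qed
  have RI: "\<beta> \<in> root_interval R v la nu \<longleftrightarrow> (\<exists>l\<in>K. 2 * l \<le> mn)"
  proof -
    have fl: "real l \<le> of_int \<lfloor>la \<bullet> coroot \<beta> / 2\<rfloor> \<longleftrightarrow> 2 * l \<le> mn" for l
      using floor_half_iff[of l mn] mn by (simp add: m_def)
    show ?thesis unfolding root_interval_def K_def using b fl by auto
  qed
  show ?thesis
  proof (cases "K = {}")
    case True
    then show ?thesis using RI cardK by simp
  next
    case False
    then obtain k where k: "k \<in> K" by blast
    define l where "l = min k (mn - k)"
    have lK: "l \<in> K" using k K2 by (simp add: l_def min_def)
    have l2: "2 * l \<le> mn" using K1[OF k] by (simp add: l_def)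
    have Keq: "K = {l, mn - l}" using K4[OF lK] K2[OF lK] lK by auto
    have inRI: "\<beta> \<in> root_interval R v la nu" using RI lK l2 by blast
    have proj_eq: "proj \<beta> la = la - (m / 2) *\<^sub>R \<beta>"
    proof -
      have "proj \<beta> la = (1/2) *\<^sub>R (2 *\<^sub>R la - m *\<^sub>R \<beta>)"
        by (simp add: proj_def refl_def m_def scaleR_2 algebra_simps)
      also have "\<dots> = la - (m / 2) *\<^sub>R \<beta>" by (simp add: scaleR_diff_right)
      finally show ?thesis .
    qed
    have np: "(norm (proj \<beta> la))^2 = (norm la)^2 - (m / 2) * (m / 2) * (\<beta> \<bullet> \<beta>)"
      unfolding proj_eq normsq_string[OF b0] m_def[symmetric] by (simp add: field_simps)
    have nn: "(norm nu)^2 = (norm la)^2 - real l * (real mn - real l) * (\<beta> \<bullet> \<beta>)" using K3[OF lK] .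
    have "norm nu = norm (proj \<beta> la) \<longleftrightarrow> (norm nu)^2 = (norm (proj \<beta> la))^2"
      by (simp add: power2_eq_iff_nonneg)
    also have "\<dots> \<longleftrightarrow> real l * (real mn - real l) * (\<beta> \<bullet> \<beta>) = (m / 2) * (m / 2) * (\<beta> \<bullet> \<beta>)"
      unfolding np nn by (rule iffI) linarith+
    also have "\<dots> \<longleftrightarrow> real l * (real mn - real l) = (m / 2) * (m / 2)"
      by (rule mult_right_cancel) (use bb in simp)
    also have "\<dots> \<longleftrightarrow> (real mn - 2 * real l)^2 = 0" using mn by (simp add: power2_eq_square algebra_simps) (rule eq_commute)
    also have "\<dots> \<longleftrightarrow> l = mn - l" using l2 by (auto simp: of_nat_diff)
    finally have nm: "nmult la nu \<beta> = (if l = mn - l then 1 else 2)" by (simp add: nmult_def)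
    have "card K = (if l = mn - l then 1 else 2)" unfolding Keq by auto
    then show ?thesis using cardK inRI nm by simp
  qed
qed

end

context RS begin

lemma weights_sub_root:
  assumes x: "x \<in> weights R" and a: "\<alpha> \<in> R"
  shows "x - real k *\<^sub>R \<alpha> \<in> weights R"
  unfolding weights_def
proof (simp only: mem_Collect_eq, intro ballI)
  fix \<beta> assume b: "\<beta> \<in> R"
  have "(x - real k *\<^sub>R \<alpha>) \<bullet> coroot \<beta> = x \<bullet> coroot \<beta> - real k * (\<alpha> \<bullet> coroot \<beta>)"
    by (simp add: inner_diff_left)
  moreover have "x \<bullet> coroot \<beta> \<in> \<int>" using x b by (simp add: weights_def)
  moreover have "\<alpha> \<bullet> coroot \<beta> \<in> \<int>" using integ[OF b a] .
  ultimately show "(x - real k *\<^sub>R \<alpha>) \<bullet> coroot \<beta> \<in> \<int>" by (simp add: Ints_diff Ints_mult)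
qed

end

context MT begin

abbreviation "D \<equiv> {mu \<in> dominant R v. dom_less R v mu la}"

definition RHS :: "'a \<Rightarrow> real" where
  "RHS y = eigval R v g la * orbit_sum R la y + (\<Sum>mu\<in>D. bcoef R v g la mu * orbit_sum R mu y)"

lemma RHS_weyl: "w \<in> W \<Longrightarrow> RHS (w y) = RHS y"
  unfolding RHS_def orbit_sum_def indicator_def using orbit_closed_iff by simp

lemma LHS_dom_less:
  assumes nu: "nu \<in> D"
  shows "LHS nu = bcoef R v g la nu"
proof -
  have nd: "nu \<in> dominant R v" and nl: "la - nu \<in> pos_cone R v" and ne: "nu \<noteq> la"
    using nu by (auto simp: dom_less_def dom_le_def)
  have nO: "nu \<notin> Ob" using dom_orbit_unique[OF la_dom nd] ne by blast
  have trm: "g \<beta> * (la \<bullet> \<beta>) * real (card {y\<in>orbit R nu. up \<beta> y la}) =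
      (if \<beta> \<in> root_interval R v la nu then g \<beta> * (la \<bullet> \<beta>) * nmult la nu \<beta> else 0)" if b: "\<beta> \<in> R" for \<beta>
  proof (cases "\<beta> \<in> Rp")
    case True then show ?thesis using M_pos[OF nd nl nO True] by simp
  next
    case False
    then have "\<beta> \<notin> root_interval R v la nu" by (simp add: root_interval_def)
    moreover have "card {y\<in>orbit R nu. up \<beta> y la} = 0" using M_neg[OF nd nl b False] by (metis card.empty)
    ultimately show ?thesis by simp
  qed
  have RIsub: "root_interval R v la nu \<subseteq> R" using Rp_sub by (auto simp: root_interval_def)
  have "Fc nu la = (\<Sum>\<beta>\<in>R. if \<beta> \<in> root_interval R v la nu then g \<beta> * (la \<bullet> \<beta>) * nmult la nu \<beta> else 0)"
    unfolding Fc_def using trm by (intro sum.cong) auto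
  also have "\<dots> = (\<Sum>\<beta>\<in>{\<beta>\<in>R. \<beta> \<in> root_interval R v la nu}. g \<beta> * (la \<bullet> \<beta>) * nmult la nu \<beta>)"
    using finR by (simp add: sum.inter_filter)
  also have "{\<beta>\<in>R. \<beta> \<in> root_interval R v la nu} = root_interval R v la nu" using RIsub by blast
  finally have "Fc nu la = (\<Sum>\<beta>\<in>root_interval R v la nu. g \<beta> * (la \<bullet> \<beta>) * nmult la nu \<beta>)" .
  then show ?thesis using LHS_count[OF nO] by (simp add: bcoef_def)
qed

lemma LHS_zero:
  assumes nd: "nu \<in> dominant R v" and nO: "nu \<notin> Ob" and nle: "\<not> dom_le R v nu la"
  shows "LHS nu = 0"
proof -
  have "T Ob \<alpha> nu = 0" if a: "\<alpha> \<in> Rp" for \<alpha>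
  proof -
    have "{x\<in>Ob. up \<alpha> nu x} = {}" using up_below[OF _ _ a] nle by (auto simp: dom_le_def)
    then show ?thesis unfolding T_def by (metis sum.empty)
  qed
  then show ?thesis using LHS_notO_pos[OF nO] by simp
qed

lemma LHS_nonweight:
  assumes y: "y \<notin> weights R"
  shows "LHS y = 0"
proof -
  have yO: "y \<notin> Ob" using y orbit_weights[OF la_w] by blast
  have "T Ob \<alpha> y = 0" if a: "\<alpha> \<in> Rp" for \<alpha>
  proof -
    have "{x\<in>Ob. up \<alpha> y x} = {}"
    proof (rule ccontr)
      assume "{x\<in>Ob. up \<alpha> y x} \<noteq> {}"
      then obtain x k where x: "x \<in> Ob" "x = y + real (Suc k) *\<^sub>R \<alpha>" by (auto simp: up_def)
      have "x - real (Suc k) *\<^sub>R \<alpha> \<in> weights R"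
        using weights_sub_root[OF orbit_weights[OF la_w x(1)]] a Rp_sub by blast
      then show False using x y by simp
    qed
    then show ?thesis unfolding T_def by (metis sum.empty)
  qed
  then show ?thesis using LHS_notO_pos[OF yO] by simp
qed

lemma RHS_nonweight:
  assumes y: "y \<notin> weights R"
  shows "RHS y = 0"
proof -
  have "y \<notin> orbit R mu" if "mu \<in> dominant R v" for mu
    using y orbit_weights that dominant_iff by blast
  then show ?thesis using la_dom by (simp add: RHS_def orbit_sum_def)
qed

lemma main_dom:
  assumes nd: "nu \<in> dominant R v"
  shows "LHS nu = RHS nu"
proof -
  have finD: "finite D" using finite_below[OF la_dom] .
  have ind: "orbit_sum R mu nu = (if mu = nu then 1 else 0)" if "mu \<in> D" for mu
  proof -
    have md: "mu \<in> dominant R v" using that by simp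
    have "nu \<in> orbit R mu \<longleftrightarrow> mu = nu" using dom_orbit_unique[OF md nd] orbit_self by blast
    then show ?thesis by (simp add: orbit_sum_def indicator_def)
  qed
  have sumD: "(\<Sum>mu\<in>D. bcoef R v g la mu * orbit_sum R mu nu) = (if nu \<in> D then bcoef R v g la nu else 0)"
  proof -
    have "(\<Sum>mu\<in>D. bcoef R v g la mu * orbit_sum R mu nu) = (\<Sum>mu\<in>D. if mu = nu then bcoef R v g la mu else 0)"
      using ind by (intro sum.cong) auto
    also have "\<dots> = (if nu \<in> D then bcoef R v g la nu else 0)"
      using finD by (simp add: sum.delta')
    finally show ?thesis .
  qed
  have inO: "orbit_sum R la nu = (if nu = la then 1 else 0)"
  proof -
    have "nu \<in> Ob \<longleftrightarrow> nu = la" using dom_orbit_unique[OF la_dom nd] orbit_self by blast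
    then show ?thesis by (simp add: orbit_sum_def indicator_def)
  qed
  show ?thesis
  proof (cases "nu = la")
    case True
    then have "nu \<notin> D" by (simp add: dom_less_def)
    then show ?thesis using True LHS_la unfolding RHS_def sumD inO by (simp add: dom_less_def)
  next
    case False
    have nO: "nu \<notin> Ob" using dom_orbit_unique[OF la_dom nd] False by blast
    show ?thesis
    proof (cases "nu \<in> D")
      case True
      then show ?thesis using LHS_dom_less False unfolding RHS_def sumD inO by simp
    next
      case nD: False
      then have "\<not> dom_le R v nu la" using nd False by (simp add: dom_less_def)
      then show ?thesis using LHS_zero[OF nd nO] nD False unfolding RHS_def sumD inO by (simp add: dom_less_def)
    qed
  qed
qed

lemma main_all: "LHS y = RHS y"
proof (cases "y \<in> weights R")
  case True
  then obtain mu where mu: "mu \<in> dominant R v" "y \<in> orbit R mu" using exists_dominant by blast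
  then obtain w where w: "w \<in> W" "y = w mu" by (auto simp: orbit_iff)
  then show ?thesis using LHS_weyl RHS_weyl main_dom[OF mu(1)] by simp
next
  case False
  then show ?thesis using LHS_nonweight RHS_nonweight by simp
qed

end

theorem mainTheorem5:
  fixes R :: "'a::euclidean_space set" and v :: 'a and g :: "'a \<Rightarrow> real" and la :: 'a
  assumes "root_system R" and "irreducible_rs R"
    and "regular_vec R v"
    and "\<And>w \<alpha>. w \<in> weyl R \<Longrightarrow> \<alpha> \<in> R \<Longrightarrow> g (w \<alpha>) = g \<alpha>"
    and "la \<in> dominant R v"
  shows "hyp_op R v g (orbit_sum R la) =
    (%\<nu>. eigval R v g la * orbit_sum R la \<nu> +
        (\<Sum>\<mu>\<in>{\<mu>\<in>dominant R v. dom_less R v \<mu> la}. bcoef R v g la \<mu> * orbit_sum R \<mu> \<nu>))"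
proof -
  interpret MT R v g la
    using assms by (unfold_locales) auto
  show ?thesis
  proof
    fix y
    show "hyp_op R v g (orbit_sum R la) y =
      eigval R v g la * orbit_sum R la y +
        (\<Sum>\<mu>\<in>{\<mu>\<in>dominant R v. dom_less R v \<mu> la}. bcoef R v g la \<mu> * orbit_sum R \<mu> y)"
      using hyp_LHS main_all by (simp add: RHS_def)
  qed
qed


end
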